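(* Let $A$ be a Banach space, give $A^\vee$ the dual norm, let $X$ be a first countable Hausdorff space, and let $\mathcal A=(X,A,\kappa)$ be a quotient vector bundle with $\kappa(x)$ closed for all $x$. Let $\mathcal A^\vee=(X,A^\vee,\kappa^\vee)$ with $\kappa^\vee(x)=F(\kappa(x))$. (1) If $\mathcal A^\vee$ is a quotient vector bundle, then both $\mathcal A$ and $\mathcal A^\vee$ are Banach bundles. (2) If $A$ is reflexive and Fréchet smooth, then $\mathcal A$ is a Banach bundle if and only if $\mathcal A^\vee$ is a Banach bundle.
   Context: Scalars are $\mathbb C$. $A^\vee$ is the space of continuous linear functionals on $A$; $F(V)=\{\phi\in A^\vee:\phi|_V=0\}$. The lower Vietoris topology on the set of subspaces of a normed space $B$ is generated by $\{V:V\cap U\ne\emptyset\}$, $U\subset B$ open. A quotient vector bundle is $(X,B,\kappa)$ with $\kappa$ continuous from $X$ into the subspaces of $B$ with the lower Vietoris topology; its associated linear bundle $E=\coprod_x B/\kappa(x)$ is the quotient of $B\times X$ by $(a,x)\sim(b,x)\iff a-b\in\kappa(x)$, with projection $\pi\colon E\to X$, and carries the fiberwise norm $\|[a,x]\|=\mathrm{dist}(a,\kappa(x))$. We say $(X,B,\kappa)$ is a Banach bundle if $E$ with this norm is a Banach bundle: each fiber is a Banach space, addition and scalar multiplication are continuous, the norm $E\to\mathbb R$ is continuous, and whenever $(e_i)$ is a net with $\|e_i\|\to0$ and $\pi(e_i)\to x$ then $e_i\to 0_x$. $A$ is Fréchet smooth if for each $a$ with $\|a\|=1$, $\lim_{\delta\to0}(\|a-\delta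 b\|-\|a\|)/\delta$ exists uniformly in $b$ with $\|b\|=1$. *)

theory Defs
  imports "HOL-Analysis.Analysis"
begin

class complex_normed_vector = real_normed_vector +
  fixes scaleC :: "complex \<Rightarrow> 'a \<Rightarrow> 'a" (infixr \<open>*\<^sub>C\<close> 75)
  assumes scaleC_add_right: "scaleC c (x + y) = scaleC c x + scaleC c y"
    and scaleC_add_left: "scaleC (c + d) x = scaleC c x + scaleC d x"
    and scaleC_scaleC: "scaleC c (scaleC d x) = scaleC (c * d) x"
    and scaleC_one: "scaleC 1 x = x"
    and scaleR_scaleC: "scaleR r x = scaleC (complex_of_real r) x"
    and norm_scaleC: "norm (scaleC c x) = cmod c * norm x"

instantiation complex :: complex_normed_vector
begin
definition scaleC_complex :: "complex \<Rightarrow> complex \<Rightarrow> complex" where "scaleC_complex c x = c * x"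
instance by standard (auto simp: scaleC_complex_def algebra_simps norm_mult scaleR_conv_of_real)
end

section \<open>Complex subspaces of a normed space B (given as a carrier inside a real normed type,
  with an explicit complex scalar multiplication sm)\<close>

definition csubspace_in :: "'b::real_normed_vector set \<Rightarrow> (complex \<Rightarrow> 'b \<Rightarrow> 'b) \<Rightarrow> 'b set \<Rightarrow> bool" where
  "csubspace_in B sm V \<longleftrightarrow> V \<subseteq> B \<and> 0 \<in> V \<and> (\<forall>u\<in>V. \<forall>v\<in>V. u + v \<in> V) \<and> (\<forall>c. \<forall>v\<in>V. sm c v \<in> V)"

definition lower_vietoris :: "'b::real_normed_vector set \<Rightarrow> (complex \<Rightarrow> 'b \<Rightarrow> 'b) \<Rightarrow> 'b set topology" where
  "lower_vietoris B sm = topology_generated_by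
     {{V. csubspace_in B sm V \<and> V \<inter> U \<noteq> {}} | U. openin (subtopology euclidean B) U}"

definition quotient_vector_bundle ::
  "'x topology \<Rightarrow> 'b::real_normed_vector set \<Rightarrow> (complex \<Rightarrow> 'b \<Rightarrow> 'b) \<Rightarrow> ('x \<Rightarrow> 'b set) \<Rightarrow> bool" where
  "quotient_vector_bundle X B sm \<kappa> \<longleftrightarrow>
     (\<forall>x\<in>topspace X. csubspace_in B sm (\<kappa> x)) \<and> continuous_map X (lower_vietoris B sm) \<kappa>"

section \<open>The associated linear bundle E = coprod_x B / kappa(x)\<close>

text \<open>A point of E is represented as a pair (x, a + kappa(x)).\<close>
definition coset :: "('x \<Rightarrow> 'b::real_normed_vector set) \<Rightarrow> 'x \<Rightarrow> 'b \<Rightarrow> 'x \<times> 'b set" where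
  "coset \<kappa> x a = (x, (\<lambda>v. a + v) ` \<kappa> x)"

definition Etot :: "'x topology \<Rightarrow> 'b::real_normed_vector set \<Rightarrow> ('x \<Rightarrow> 'b set) \<Rightarrow> ('x \<times> 'b set) set" where
  "Etot X B \<kappa> = {coset \<kappa> x a | x a. x \<in> topspace X \<and> a \<in> B}"

definition Eopen :: "'x topology \<Rightarrow> 'b::real_normed_vector set \<Rightarrow> ('x \<Rightarrow> 'b set) \<Rightarrow> ('x \<times> 'b set) set \<Rightarrow> bool" where
  "Eopen X B \<kappa> U \<longleftrightarrow> U \<subseteq> Etot X B \<kappa> \<and>
     openin (prod_topology (subtopology euclidean B) X) {p \<in> B \<times> topspace X. coset \<kappa> (snd p) (fst p) \<in> U}"

lemma istopology_Eopen: "istopology (Eopen X B \<kappa>)"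
  unfolding istopology_def
proof (intro conjI allI impI)
  fix S T assume S: "Eopen X B \<kappa> S" and T: "Eopen X B \<kappa> T"
  have "{p \<in> B \<times> topspace X. coset \<kappa> (snd p) (fst p) \<in> S \<inter> T} =
        {p \<in> B \<times> topspace X. coset \<kappa> (snd p) (fst p) \<in> S} \<inter> {p \<in> B \<times> topspace X. coset \<kappa> (snd p) (fst p) \<in> T}"
    by auto
  then show "Eopen X B \<kappa> (S \<inter> T)" using S T unfolding Eopen_def by auto
next
  fix K assume K: "\<forall>S\<in>K. Eopen X B \<kappa> S"
  have "{p \<in> B \<times> topspace X. coset \<kappa> (snd p) (fst p) \<in> \<Union>K} =
        (\<Union>S\<in>K. {p \<in> B \<times> topspace X. coset \<kappa> (snd p) (fst p) \<in> S})"
    by auto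
  then show "Eopen X B \<kappa> (\<Union>K)" using K unfolding Eopen_def by auto
qed

text \<open>E carries the quotient topology of B \<times> X.\<close>
definition Etop :: "'x topology \<Rightarrow> 'b::real_normed_vector set \<Rightarrow> ('x \<Rightarrow> 'b set) \<Rightarrow> ('x \<times> 'b set) topology" where
  "Etop X B \<kappa> = topology (Eopen X B \<kappa>)"

definition Ezero :: "('x \<Rightarrow> 'b::real_normed_vector set) \<Rightarrow> 'x \<Rightarrow> 'x \<times> 'b set" where
  "Ezero \<kappa> x = (x, \<kappa> x)"

definition Eadd :: "'x \<times> 'b::real_normed_vector set \<Rightarrow> 'x \<times> 'b set \<Rightarrow> 'x \<times> 'b set" where
  "Eadd e f = (fst e, {c + d | c d. c \<in> snd e \<and> d \<in> snd f})"

definition Esmul :: "(complex \<Rightarrow> 'b::real_normed_vector \<Rightarrow> 'b) \<Rightarrow> ('x \<Rightarrow> 'b set) \<Rightarrow> complex \<Rightarrow> 'x \<times> 'b set \<Rightarrow> 'x \<times> 'b set" where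
  "Esmul sm \<kappa> c e = (fst e, {sm c a + v | a v. a \<in> snd e \<and> v \<in> \<kappa> (fst e)})"

definition Esub :: "(complex \<Rightarrow> 'b::real_normed_vector \<Rightarrow> 'b) \<Rightarrow> ('x \<Rightarrow> 'b set) \<Rightarrow> 'x \<times> 'b set \<Rightarrow> 'x \<times> 'b set \<Rightarrow> 'x \<times> 'b set" where
  "Esub sm \<kappa> e f = Eadd e (Esmul sm \<kappa> (-1) f)"

text \<open>Fibrewise norm: \<parallel>[a,x]\<parallel> = dist(a, kappa x) = inf of norms over the coset.\<close>
definition Enorm :: "'x \<times> 'b::real_normed_vector set \<Rightarrow> real" where
  "Enorm e = infdist 0 (snd e)"

definition banach_bundle ::
  "'x topology \<Rightarrow> 'b::real_normed_vector set \<Rightarrow> (complex \<Rightarrow> 'b \<Rightarrow> 'b) \<Rightarrow> ('x \<Rightarrow> 'b set) \<Rightarrow> bool" where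
  "banach_bundle X B sm \<kappa> \<longleftrightarrow>
     \<comment> \<open>each fibre is a Banach space for the fibrewise norm\<close>
     (\<forall>x\<in>topspace X.
        (\<forall>e\<in>Etot X B \<kappa>. fst e = x \<and> Enorm e = 0 \<longrightarrow> e = Ezero \<kappa> x) \<and>
        (\<forall>s::nat \<Rightarrow> 'x \<times> 'b set.
           (\<forall>n. s n \<in> Etot X B \<kappa> \<and> fst (s n) = x) \<and>
           (\<forall>\<epsilon>>0. \<exists>N. \<forall>m\<ge>N. \<forall>n\<ge>N. Enorm (Esub sm \<kappa> (s m) (s n)) < \<epsilon>) \<longrightarrow>
           (\<exists>e\<in>Etot X B \<kappa>. fst e = x \<and> (\<lambda>n. Enorm (Esub sm \<kappa> (s n) e)) \<longlonglongrightarrow> 0))) \<and>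
     \<comment> \<open>addition is continuous on the fibre product E \<times>_X E\<close>
     continuous_map
       (subtopology (prod_topology (Etop X B \<kappa>) (Etop X B \<kappa>))
          {(e, f). e \<in> Etot X B \<kappa> \<and> f \<in> Etot X B \<kappa> \<and> fst e = fst f})
       (Etop X B \<kappa>) (\<lambda>(e, f). Eadd e f) \<and>
     \<comment> \<open>scalar multiplication is continuous\<close>
     continuous_map (prod_topology euclidean (Etop X B \<kappa>)) (Etop X B \<kappa>) (\<lambda>(c, e). Esmul sm \<kappa> c e) \<and>
     \<comment> \<open>the norm is continuous\<close>
     continuous_map (Etop X B \<kappa>) euclideanreal Enorm \<and>
     \<comment> \<open>nets (as filters) with norm tending to 0 and base point tending to x converge to 0_x\<close>
     (\<forall>F x. x \<in> topspace X \<and> eventually (\<lambda>e. e \<in> Etot X B \<kappa>) F \<and>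
            (Enorm \<longlongrightarrow> 0) F \<and> limitin X fst x F \<longrightarrow>
            limitin (Etop X B \<kappa>) (\<lambda>e. e) (Ezero \<kappa> x) F)"

text \<open>Continuous complex-linear functionals on A, as a subset of the bounded real-linear maps
  A \<Rightarrow> complex; the blinfun norm is the operator (dual) norm.\<close>
definition cdual :: "('a::complex_normed_vector \<Rightarrow>\<^sub>L complex) set" where
  "cdual = {f. \<forall>c x. blinfun_apply f (c *\<^sub>C x) = c * blinfun_apply f x}"

definition dual_smul :: "complex \<Rightarrow> ('a::complex_normed_vector \<Rightarrow>\<^sub>L complex) \<Rightarrow> ('a \<Rightarrow>\<^sub>L complex)" where
  "dual_smul c f = blinfun_mult_left c o\<^sub>L f"

definition annih :: "'a::complex_normed_vector set \<Rightarrow> ('a \<Rightarrow>\<^sub>L complex) set" where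
  "annih V = {\<phi> \<in> cdual. \<forall>v\<in>V. blinfun_apply \<phi> v = 0}"

definition reflexive_space :: "'a::complex_normed_vector itself \<Rightarrow> bool" where
  "reflexive_space _ \<longleftrightarrow>
     (\<forall>\<Phi> :: ('a \<Rightarrow>\<^sub>L complex) \<Rightarrow> complex.
        (\<forall>f\<in>cdual. \<forall>g\<in>cdual. \<Phi> (f + g) = \<Phi> f + \<Phi> g) \<and>
        (\<forall>c. \<forall>f\<in>cdual. \<Phi> (dual_smul c f) = c * \<Phi> f) \<and>
        (\<exists>K. \<forall>f\<in>cdual. norm (\<Phi> f) \<le> K * norm f) \<longrightarrow>
        (\<exists>a::'a. \<forall>f\<in>cdual. \<Phi> f = blinfun_apply f a))"

definition frechet_smooth :: "'a::complex_normed_vector itself \<Rightarrow> bool" where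
  "frechet_smooth _ \<longleftrightarrow>
     (\<forall>a::'a. norm a = 1 \<longrightarrow>
        (\<exists>L :: 'a \<Rightarrow> real. \<forall>\<epsilon>>0. \<exists>\<delta>0>0. \<forall>b::'a. norm b = 1 \<longrightarrow>
           (\<forall>\<delta>::real. \<delta> \<noteq> 0 \<and> \<bar>\<delta>\<bar> < \<delta>0 \<longrightarrow>
              \<bar>(norm (a - \<delta> *\<^sub>R b) - norm a) / \<delta> - L b\<bar> < \<epsilon>)))"

end

theory Submission
  imports Defs
begin

definition rsub :: "'v::real_vector set \<Rightarrow> bool" where
  "rsub S \<longleftrightarrow> 0 \<in> S \<and> (\<forall>x\<in>S. \<forall>y\<in>S. x + y \<in> S) \<and> (\<forall>t. \<forall>x\<in>S. t *\<^sub>R x \<in> S)"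

definition hbgraphs :: "'v::real_normed_vector set \<Rightarrow> 'v set \<Rightarrow> ('v \<Rightarrow> real) \<Rightarrow> real \<Rightarrow> ('v \<times> real) set set" where
  "hbgraphs S M f K = {G. rsub G \<and> (\<forall>x y z. (x,y)\<in>G \<longrightarrow> (x,z)\<in>G \<longrightarrow> y = z) \<and> fst ` G \<subseteq> S
      \<and> (\<forall>x\<in>M. (x, f x) \<in> G) \<and> (\<forall>x y. (x,y) \<in> G \<longrightarrow> y \<le> K * norm x)}"

lemma rsub_fst: assumes "rsub G" shows "rsub (fst ` G)"
  unfolding rsub_def
proof (intro conjI ballI allI)
  show "0 \<in> fst ` G" using assms unfolding rsub_def by force
next
  fix x y assume "x \<in> fst ` G" "y \<in> fst ` G"
  then obtain a b where "(x,a) \<in> G" "(y,b) \<in> G" by force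
  then have "(x,a) + (y,b) \<in> G" using assms unfolding rsub_def by blast
  then show "x + y \<in> fst ` G" by force
next
  fix t x assume "x \<in> fst ` G"
  then obtain a where "(x,a) \<in> G" by force
  then have "t *\<^sub>R (x,a) \<in> G" using assms unfolding rsub_def by blast
  then show "t *\<^sub>R x \<in> fst ` G" by force
qed

lemma hb_step:
  fixes G :: "('v::real_normed_vector \<times> real) set"
  assumes G: "G \<in> hbgraphs S M f K" and S: "rsub S" and x0: "x0 \<in> S" "x0 \<notin> fst ` G" and K: "K \<ge> 0"
  shows "\<exists>G'\<in>hbgraphs S M f K. G \<subseteq> G' \<and> G' \<noteq> G"
proof -
  have Gs: "rsub G" and Gf: "\<And>x y z. (x,y)\<in>G \<Longrightarrow> (x,z)\<in>G \<Longrightarrow> y = z" and GS: "fst ` G \<subseteq> S"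
    and GM: "\<And>x. x\<in>M \<Longrightarrow> (x, f x) \<in> G" and Gd: "\<And>x y. (x,y) \<in> G \<Longrightarrow> y \<le> K * norm x"
    using G unfolding hbgraphs_def by blast+
  have G0: "(0,0) \<in> G" using Gs by (simp add: rsub_def zero_prod_def)
  have Gadd: "(x+x',y+y')\<in>G" if "(x,y)\<in>G" "(x',y')\<in>G" for x y x' y'
  proof -
    have "(x,y) + (x',y') \<in> G" using Gs that unfolding rsub_def by blast
    then show ?thesis by simp
  qed
  have Gsc: "(t *\<^sub>R x, t * y)\<in>G" if "(x,y)\<in>G" for x y t
  proof -
    have "t *\<^sub>R (x,y) \<in> G" using Gs that unfolding rsub_def by blast
    then show ?thesis by simp
  qed
  have key: "y - K * norm (z - x0) \<le> K * norm (w + x0) - y'" if "(z,y)\<in>G" "(w,y')\<in>G" for z y w y'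
  proof -
    have "y + y' \<le> K * norm (z + w)" using Gd[OF Gadd[OF that]] .
    also have "\<dots> \<le> K * (norm (z - x0) + norm (w + x0))"
      using K norm_triangle_ineq[of "z - x0" "w + x0"] by (intro mult_left_mono) auto
    finally show ?thesis by (simp add: algebra_simps)
  qed
  define L where "L = {y - K * norm (z - x0) | z y. (z,y)\<in>G}"
  define c where "c = Sup L"
  have Lne: "L \<noteq> {}" using G0 unfolding L_def by blast
  have Lbd: "\<And>l. l \<in> L \<Longrightarrow> l \<le> K * norm (0 + x0) - 0" using key G0 unfolding L_def by blast
  have c_up: "y - K * norm (z - x0) \<le> c" if "(z,y)\<in>G" for z y
    unfolding c_def by (rule cSup_upper) (use that Lbd in \<open>auto simp: L_def bdd_above_def\<close>)
  have c_lo: "c \<le> K * norm (w + x0) - y'" if "(w,y')\<in>G" for w y'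
    unfolding c_def by (rule cSup_least) (use Lne key that in \<open>auto simp: L_def\<close>)
  define G' where "G' = {(z + t *\<^sub>R x0, y + t * c) | z y t. (z,y)\<in>G}"
  have sub: "G \<subseteq> G'" unfolding G'_def by force
  have x0G': "(x0, c) \<in> G'" unfolding G'_def using G0 by force
  have neq: "G' \<noteq> G" using x0G' x0(2) by force
  have "G' \<in> hbgraphs S M f K"
    unfolding hbgraphs_def
  proof (intro CollectI conjI allI impI ballI)
    show "rsub G'" unfolding rsub_def
    proof (intro conjI ballI allI)
      show "0 \<in> G'" using sub G0 by (auto simp: zero_prod_def)
    next
      fix p q assume "p \<in> G'" "q \<in> G'"
      then obtain z y t z' y' t' where p: "p = (z + t *\<^sub>R x0, y + t * c)" "(z,y)\<in>G"
        and q: "q = (z' + t' *\<^sub>R x0, y' + t' * c)" "(z',y')\<in>G" unfolding G'_def by blast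
      have "p + q = ((z+z') + (t+t') *\<^sub>R x0, (y+y') + (t+t') * c)"
        using p q by (simp add: algebra_simps scaleR_add_left)
      then show "p + q \<in> G'" unfolding G'_def using Gadd[OF p(2) q(2)] by blast
    next
      fix s p assume "p \<in> G'"
      then obtain z y t where p: "p = (z + t *\<^sub>R x0, y + t * c)" "(z,y)\<in>G" unfolding G'_def by blast
      have "s *\<^sub>R p = (s *\<^sub>R z + (s*t) *\<^sub>R x0, s * y + (s*t) * c)"
        using p by (simp add: algebra_simps scaleR_add_right)
      then show "s *\<^sub>R p \<in> G'" unfolding G'_def using Gsc[OF p(2)] by blast
    qed
  next
    fix x y1 y2 assume "(x,y1) \<in> G'" "(x,y2) \<in> G'"
    then obtain z y t z' y' t' where p: "x = z + t *\<^sub>R x0" "y1 = y + t * c" "(z,y)\<in>G"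
        and q: "x = z' + t' *\<^sub>R x0" "y2 = y' + t' * c" "(z',y')\<in>G" unfolding G'_def by blast
    have tt: "t = t'"
    proof (rule ccontr)
      assume "t \<noteq> t'"
      have "(t - t') *\<^sub>R x0 = z' - z" using p(1) q(1) by (simp add: algebra_simps)
      have "x0 = (1/(t-t')) *\<^sub>R ((t - t') *\<^sub>R x0)" using \<open>t \<noteq> t'\<close> by simp
      also have "\<dots> = (1/(t-t')) *\<^sub>R (z' + (-1) *\<^sub>R z)" using \<open>(t - t') *\<^sub>R x0 = z' - z\<close> by simp
      finally have x0eq: "x0 = (1/(t-t')) *\<^sub>R (z' + (-1) *\<^sub>R z)" .
      have D: "rsub (fst ` G)" by (rule rsub_fst[OF Gs])
      have "z \<in> fst ` G" "z' \<in> fst ` G" using p(3) q(3) by force+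
      then have "(1/(t-t')) *\<^sub>R (z' + (-1) *\<^sub>R z) \<in> fst ` G"
        using D unfolding rsub_def by blast
      then have "x0 \<in> fst ` G" using x0eq by simp
      then show False using x0(2) by simp
    qed
    then have "z = z'" using p(1) q(1) by simp
    then have "y = y'" using Gf p(3) q(3) by blast
    then show "y1 = y2" using p q tt by simp
  next
    show "fst ` G' \<subseteq> S"
    proof
      fix x assume "x \<in> fst ` G'"
      then obtain z y t where "x = z + t *\<^sub>R x0" "(z,y)\<in>G" unfolding G'_def by force
      moreover have "z \<in> S" using GS \<open>(z,y)\<in>G\<close> by force
      ultimately show "x \<in> S" using S x0(1) unfolding rsub_def by blast
    qed
  next
    fix x assume "x \<in> M" then show "(x, f x) \<in> G'" using sub GM by blast
  next
    fix x y1 assume "(x,y1) \<in> G'"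
    then obtain z y t where p: "x = z + t *\<^sub>R x0" "y1 = y + t * c" "(z,y)\<in>G" unfolding G'_def by blast
    consider "t = 0" | "t > 0" | "t < 0" by linarith
    then show "y1 \<le> K * norm x"
    proof cases
      case 1 then show ?thesis using p Gd by simp
    next
      case 2
      have "(inverse t *\<^sub>R z, inverse t * y) \<in> G" using Gsc[OF p(3)] .
      from c_lo[OF this] have "t * c \<le> t * (K * norm (inverse t *\<^sub>R z + x0) - inverse t * y)"
        using 2 by (intro mult_left_mono) auto
      also have "\<dots> = K * norm (t *\<^sub>R (inverse t *\<^sub>R z + x0)) - y"
      proof -
        have "norm (t *\<^sub>R (inverse t *\<^sub>R z + x0)) = t * norm (inverse t *\<^sub>R z + x0)" using 2 by simp
        moreover have "t * (inverse t * y) = y" using 2 by simp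
        ultimately show ?thesis by (simp only: right_diff_distrib) (simp add: ac_simps)
      qed
      also have "t *\<^sub>R (inverse t *\<^sub>R z + x0) = x" using 2 p(1) by (simp add: scaleR_add_right)
      finally show ?thesis using p(2) by simp
    next
      case 3
      define s where "s = - t"
      have s: "s > 0" using 3 s_def by simp
      have "(inverse s *\<^sub>R z, inverse s * y) \<in> G" using Gsc[OF p(3)] .
      from c_up[OF this] have h1: "s * (inverse s * y - K * norm (inverse s *\<^sub>R z - x0)) \<le> s * c"
        using s by (intro mult_left_mono) auto
      have h2: "s * (inverse s * y - K * norm (inverse s *\<^sub>R z - x0)) = y - K * norm (s *\<^sub>R (inverse s *\<^sub>R z - x0))"
      proof -
        have "norm (s *\<^sub>R (inverse s *\<^sub>R z - x0)) = s * norm (inverse s *\<^sub>R z - x0)" using s by simp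
        moreover have "s * (inverse s * y) = y" using s by simp
        ultimately show ?thesis by (simp only: right_diff_distrib) (simp add: ac_simps)
      qed
      have h3: "s *\<^sub>R (inverse s *\<^sub>R z - x0) = x" using s p(1) s_def by (simp add: scaleR_diff_right)
      have "y - K * norm x \<le> s * c" using h1 unfolding h2 h3 .
      moreover have "s * c = - (t * c)" using s_def by simp
      ultimately show ?thesis using p(2) by linarith
    qed
  qed
  then show ?thesis using sub neq by blast
qed

lemma hb_real:
  fixes S M :: "'v::real_normed_vector set" and f :: "'v \<Rightarrow> real"
  assumes S: "rsub S" and M: "rsub M" "M \<subseteq> S" and K: "K \<ge> 0"
   and fadd: "\<forall>x\<in>M. \<forall>y\<in>M. f (x+y) = f x + f y" and fsc: "\<forall>x\<in>M. \<forall>t. f (t *\<^sub>R x) = t * f x"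
   and fb: "\<forall>x\<in>M. f x \<le> K * norm x"
  shows "\<exists>g. (\<forall>x\<in>S. \<forall>y\<in>S. g (x+y) = g x + g y) \<and> (\<forall>x\<in>S. \<forall>t. g (t *\<^sub>R x) = t * g x)
            \<and> (\<forall>x\<in>M. g x = f x) \<and> (\<forall>x\<in>S. g x \<le> K * norm x)"
proof -
  define A where "A = hbgraphs S M f K"
  define G0 where "G0 = (\<lambda>x. (x, f x)) ` M"
  have G0A: "G0 \<in> A" unfolding A_def hbgraphs_def
  proof (intro CollectI conjI allI impI ballI)
    show "rsub G0" unfolding rsub_def
    proof (intro conjI ballI allI)
      have "0 \<in> M" using M(1) unfolding rsub_def by blast
      then have "f (0 *\<^sub>R 0) = 0 * f 0" using fsc by blast
      then have "f 0 = 0" by simp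
      then show "0 \<in> G0" using M(1) unfolding G0_def rsub_def by (force simp: zero_prod_def)
    next
      fix p q assume "p \<in> G0" "q \<in> G0"
      then obtain x y where "p = (x, f x)" "q = (y, f y)" "x \<in> M" "y \<in> M" unfolding G0_def by blast
      then have "p + q = (x + y, f (x + y))" "x + y \<in> M" using fadd M(1) unfolding rsub_def by auto
      then show "p + q \<in> G0" unfolding G0_def by blast
    next
      fix t p assume "p \<in> G0"
      then obtain x where "p = (x, f x)" "x \<in> M" unfolding G0_def by blast
      then have "t *\<^sub>R p = (t *\<^sub>R x, f (t *\<^sub>R x))" "t *\<^sub>R x \<in> M" using fsc M(1) unfolding rsub_def by auto
      then show "t *\<^sub>R p \<in> G0" unfolding G0_def by blast
    qed
  next
    fix x y z assume "(x,y) \<in> G0" "(x,z) \<in> G0" then show "y = z" unfolding G0_def by blast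
  next
    show "fst ` G0 \<subseteq> S" using M(2) unfolding G0_def by auto
  next
    fix x assume "x \<in> M" then show "(x, f x) \<in> G0" unfolding G0_def by blast
  next
    fix x y assume "(x,y) \<in> G0" then show "y \<le> K * norm x" using fb unfolding G0_def by blast
  qed
  have chainU: "\<Union>C \<in> A" if C: "C \<in> chains A" "C \<noteq> {}" for C
  proof -
    have CA: "C \<subseteq> A" and Cch: "\<And>X Y. X \<in> C \<Longrightarrow> Y \<in> C \<Longrightarrow> X \<subseteq> Y \<or> Y \<subseteq> X"
      using C(1) unfolding chains_def chain_subset_def by blast+
    obtain X0 where X0: "X0 \<in> C" using C(2) by blast
    have memA: "\<And>X. X \<in> C \<Longrightarrow> X \<in> hbgraphs S M f K" using CA A_def by blast
    show ?thesis unfolding A_def hbgraphs_def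
    proof (intro CollectI conjI allI impI ballI)
      show "rsub (\<Union>C)" unfolding rsub_def
      proof (intro conjI ballI allI)
        show "0 \<in> \<Union>C" using memA[OF X0] X0 unfolding hbgraphs_def rsub_def by blast
      next
        fix p q assume "p \<in> \<Union>C" "q \<in> \<Union>C"
        then obtain X Y where XY: "X \<in> C" "Y \<in> C" "p \<in> X" "q \<in> Y" by blast
        from Cch[OF XY(1,2)] show "p + q \<in> \<Union>C"
        proof
          assume "X \<subseteq> Y" then have "p + q \<in> Y" using memA[OF XY(2)] XY unfolding hbgraphs_def rsub_def by blast
          then show ?thesis using XY by blast
        next
          assume "Y \<subseteq> X" then have "p + q \<in> X" using memA[OF XY(1)] XY unfolding hbgraphs_def rsub_def by blast
          then show ?thesis using XY by blast
        qed
      next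
        fix t p assume "p \<in> \<Union>C"
        then obtain X where X: "X \<in> C" "p \<in> X" by blast
        then have "t *\<^sub>R p \<in> X" using memA[OF X(1)] unfolding hbgraphs_def rsub_def by blast
        then show "t *\<^sub>R p \<in> \<Union>C" using X by blast
      qed
    next
      fix x y z assume "(x,y) \<in> \<Union>C" "(x,z) \<in> \<Union>C"
      then obtain X Y where XY: "X \<in> C" "Y \<in> C" "(x,y) \<in> X" "(x,z) \<in> Y" by blast
      from Cch[OF XY(1,2)] show "y = z"
      proof
        assume "X \<subseteq> Y" then show ?thesis using memA[OF XY(2)] XY unfolding hbgraphs_def by blast
      next
        assume "Y \<subseteq> X" then show ?thesis using memA[OF XY(1)] XY unfolding hbgraphs_def by blast
      qed
    next
      show "fst ` \<Union>C \<subseteq> S" using memA unfolding hbgraphs_def by blast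
    next
      fix x assume "x \<in> M" then show "(x, f x) \<in> \<Union>C" using memA[OF X0] X0 unfolding hbgraphs_def by blast
    next
      fix x y assume "(x,y) \<in> \<Union>C" then show "y \<le> K * norm x" using memA unfolding hbgraphs_def by blast
    qed
  qed
  have "\<forall>C\<in>chains A. \<exists>U\<in>A. \<forall>X\<in>C. X \<subseteq> U"
  proof
    fix C assume C: "C \<in> chains A"
    show "\<exists>U\<in>A. \<forall>X\<in>C. X \<subseteq> U"
    proof (cases "C = {}")
      case True then show ?thesis using G0A by blast
    next
      case False then show ?thesis using chainU[OF C False] by blast
    qed
  qed
  from Zorn_Lemma2[OF this] obtain Gm where Gm: "Gm \<in> A" and max: "\<And>X. X \<in> A \<Longrightarrow> Gm \<subseteq> X \<Longrightarrow> X = Gm"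
    by blast
  have Gs: "rsub Gm" and Gf: "\<And>x y z. (x,y)\<in>Gm \<Longrightarrow> (x,z)\<in>Gm \<Longrightarrow> y = z" and GS: "fst ` Gm \<subseteq> S"
    and GM: "\<And>x. x\<in>M \<Longrightarrow> (x, f x) \<in> Gm" and Gd: "\<And>x y. (x,y) \<in> Gm \<Longrightarrow> y \<le> K * norm x"
    using Gm unfolding A_def hbgraphs_def by blast+
  have full: "fst ` Gm = S"
  proof (rule ccontr)
    assume "fst ` Gm \<noteq> S"
    then obtain x0 where "x0 \<in> S" "x0 \<notin> fst ` Gm" using GS by blast
    from hb_step[OF Gm[unfolded A_def] S this K] obtain G' where "G' \<in> A" "Gm \<subseteq> G'" "G' \<noteq> Gm"
      unfolding A_def by blast
    then show False using max by blast
  qed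
  define g where "g x = (THE y. (x,y) \<in> Gm)" for x
  have gG: "(x, g x) \<in> Gm" if xS: "x \<in> S" for x
  proof -
    have "x \<in> fst ` Gm" using xS full by simp
    then obtain y where y: "(x,y) \<in> Gm" by force
    have "g x = y" unfolding g_def using y Gf by blast
    then show ?thesis using y by simp
  qed
  have Gadd: "(x+x',y+y')\<in>Gm" if "(x,y)\<in>Gm" "(x',y')\<in>Gm" for x y x' y'
  proof -
    have "(x,y) + (x',y') \<in> Gm" using Gs that unfolding rsub_def by blast
    then show ?thesis by simp
  qed
  have Gsc: "(t *\<^sub>R x, t * y)\<in>Gm" if "(x,y)\<in>Gm" for x y t
  proof -
    have "t *\<^sub>R (x,y) \<in> Gm" using Gs that unfolding rsub_def by blast
    then show ?thesis by simp
  qed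
  have SS: "x + y \<in> S" "t *\<^sub>R x \<in> S" if "x \<in> S" "y \<in> S" for x y t using S that unfolding rsub_def by blast+
  show ?thesis
  proof (intro exI conjI ballI allI)
    fix x y assume "x \<in> S" "y \<in> S"
    show "g (x+y) = g x + g y" using Gf[OF gG[OF SS(1)[OF \<open>x\<in>S\<close> \<open>y\<in>S\<close>]] Gadd[OF gG gG]] \<open>x\<in>S\<close> \<open>y\<in>S\<close> by blast
  next
    fix x t assume "x \<in> S"
    show "g (t *\<^sub>R x) = t * g x" using Gf[OF gG[OF SS(2)[OF \<open>x\<in>S\<close> \<open>x\<in>S\<close>]] Gsc[OF gG[OF \<open>x\<in>S\<close>]]] by blast
  next
    fix x assume "x \<in> M"
    then show "g x = f x" using Gf[OF gG GM] M(2) by blast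
  next
    fix x assume "x \<in> S" then show "g x \<le> K * norm x" using Gd[OF gG] by blast
  qed
qed

locale cvs =
  fixes S :: "'v::real_normed_vector set" and sm :: "complex \<Rightarrow> 'v \<Rightarrow> 'v"
  assumes S_sub: "rsub S"
  and sm_closed: "x \<in> S \<Longrightarrow> sm c x \<in> S"
  and sm_add: "x \<in> S \<Longrightarrow> y \<in> S \<Longrightarrow> sm c (x + y) = sm c x + sm c y"
  and sm_addc: "x \<in> S \<Longrightarrow> sm (c + d) x = sm c x + sm d x"
  and sm_assoc: "x \<in> S \<Longrightarrow> sm c (sm d x) = sm (c * d) x"
  and sm_real: "x \<in> S \<Longrightarrow> sm (of_real r) x = r *\<^sub>R x"
  and sm_norm: "x \<in> S \<Longrightarrow> norm (sm c x) = cmod c * norm x"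
begin

lemma S0: "0 \<in> S" and Sadd: "x \<in> S \<Longrightarrow> y \<in> S \<Longrightarrow> x + y \<in> S" and Ssc: "x \<in> S \<Longrightarrow> t *\<^sub>R x \<in> S"
  using S_sub unfolding rsub_def by blast+

lemma Sneg: "x \<in> S \<Longrightarrow> - x \<in> S" using Ssc[of x "-1"] by simp
lemma Sdiff: "x \<in> S \<Longrightarrow> y \<in> S \<Longrightarrow> x - y \<in> S" using Sadd[OF _ Sneg[of y]] by simp

lemma sm_one: "x \<in> S \<Longrightarrow> sm 1 x = x" using sm_real[of x 1] by simp
lemma sm_zeroc: "x \<in> S \<Longrightarrow> sm 0 x = 0" using sm_real[of x 0] by simp
lemma sm_negone: "x \<in> S \<Longrightarrow> sm (-1) x = - x" using sm_real[of x "-1"] by simp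
lemma sm_negc: "x \<in> S \<Longrightarrow> sm (- c) x = - sm c x"
proof -
  assume x: "x \<in> S"
  have "sm (- c) x = sm (-1) (sm c x)" using sm_assoc[OF x, of "-1" c] by simp
  then show ?thesis using sm_negone[OF sm_closed[OF x]] by simp
qed
lemma sm_diffc: "x \<in> S \<Longrightarrow> sm (c - d) x = sm c x - sm d x"
  using sm_addc[of x c "-d"] sm_negc[of x d] by simp
lemma sm_zero: "sm c 0 = 0"
proof -
  have "sm c (0 + 0) = sm c 0 + sm c 0" using sm_add S0 by blast
  then show ?thesis by simp
qed
lemma sm_neg: "x \<in> S \<Longrightarrow> sm c (- x) = - sm c x"
proof -
  assume x: "x \<in> S"
  have "sm c (x + - x) = sm c x + sm c (- x)" using sm_add[OF x Sneg[OF x]] .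
  then have "sm c x + sm c (- x) = 0" using sm_zero by simp
  then show ?thesis by (simp add: add_eq_0_iff2)
qed
lemma sm_diff: "x \<in> S \<Longrightarrow> y \<in> S \<Longrightarrow> sm c (x - y) = sm c x - sm c y"
  using sm_add[of x "- y" c] sm_neg[of y c] Sneg[of y] by simp
lemma sm_scaleR: "x \<in> S \<Longrightarrow> sm c (r *\<^sub>R x) = r *\<^sub>R sm c x"
proof -
  assume x: "x \<in> S"
  have "sm c (r *\<^sub>R x) = sm c (sm (of_real r) x)" using sm_real[OF x] by simp
  also have "\<dots> = sm (of_real r * c) x" using sm_assoc[OF x] by (simp add: mult.commute)
  also have "\<dots> = sm (of_real r) (sm c x)" using sm_assoc[OF x] by simp
  also have "\<dots> = r *\<^sub>R sm c x" using sm_real[OF sm_closed[OF x]] by simp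
  finally show ?thesis .
qed

lemma hb_complex:
  fixes M :: "'v set" and F :: "'v \<Rightarrow> complex"
  assumes M: "rsub M" "M \<subseteq> S" "\<And>c x. x \<in> M \<Longrightarrow> sm c x \<in> M" and K: "K \<ge> 0"
    and Fadd: "\<And>x y. x \<in> M \<Longrightarrow> y \<in> M \<Longrightarrow> F (x + y) = F x + F y"
    and Fsm: "\<And>x c. x \<in> M \<Longrightarrow> F (sm c x) = c * F x"
    and Fb: "\<And>x. x \<in> M \<Longrightarrow> cmod (F x) \<le> K * norm x"
  shows "\<exists>G. (\<forall>x\<in>S. \<forall>y\<in>S. G (x + y) = G x + G y) \<and> (\<forall>x\<in>S. \<forall>c. G (sm c x) = c * G x)
            \<and> (\<forall>x\<in>M. G x = F x) \<and> (\<forall>x\<in>S. cmod (G x) \<le> K * norm x)"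
proof -
  define f where "f x = Re (F x)" for x
  have "\<exists>g. (\<forall>x\<in>S. \<forall>y\<in>S. g (x+y) = g x + g y) \<and> (\<forall>x\<in>S. \<forall>t. g (t *\<^sub>R x) = t * g x)
            \<and> (\<forall>x\<in>M. g x = f x) \<and> (\<forall>x\<in>S. g x \<le> K * norm x)"
  proof (rule hb_real[OF S_sub M(1) M(2) K])
    show "\<forall>x\<in>M. \<forall>y\<in>M. f (x + y) = f x + f y" using Fadd unfolding f_def by simp
    show "\<forall>x\<in>M. \<forall>t. f (t *\<^sub>R x) = t * f x"
    proof (intro ballI allI)
      fix x t assume x: "x \<in> M"
      then have "x \<in> S" using M by blast
      then have "t *\<^sub>R x = sm (of_real t) x" using sm_real by simp
      then show "f (t *\<^sub>R x) = t * f x" unfolding f_def using Fsm[OF x, of "of_real t"] by simp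
    qed
    show "\<forall>x\<in>M. f x \<le> K * norm x" using Fb complex_Re_le_cmod order_trans unfolding f_def by blast
  qed
  then obtain g where gadd: "\<And>x y. x \<in> S \<Longrightarrow> y \<in> S \<Longrightarrow> g (x+y) = g x + g y"
    and gsc: "\<And>x t. x \<in> S \<Longrightarrow> g (t *\<^sub>R x) = t * g x" and gM: "\<And>x. x \<in> M \<Longrightarrow> g x = f x"
    and gb: "\<And>x. x \<in> S \<Longrightarrow> g x \<le> K * norm x" by blast
  define G where "G x = Complex (g x) (- g (sm \<i> x))" for x
  have ReG: "Re (G x) = g x" for x unfolding G_def by simp
  have Gadd: "G (x + y) = G x + G y" if "x \<in> S" "y \<in> S" for x y
    using that gadd sm_add sm_closed unfolding G_def by (simp add: complex_eq_iff)
  have GR: "G (r *\<^sub>R x) = of_real r * G x" if "x \<in> S" for x r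
    using that gsc sm_scaleR sm_closed unfolding G_def by (simp add: complex_eq_iff)
  have Gi: "G (sm \<i> x) = \<i> * G x" if x: "x \<in> S" for x
  proof -
    have "sm \<i> (sm \<i> x) = (-1) *\<^sub>R x" using sm_assoc[OF x] sm_real[OF x, of "-1"] by simp
    then have "g (sm \<i> (sm \<i> x)) = - g x" using gsc[OF x, of "-1"] by simp
    then show ?thesis unfolding G_def by (simp add: complex_eq_iff)
  qed
  have Gsm: "G (sm c x) = c * G x" if x: "x \<in> S" for x c
  proof -
    have "c = of_real (Re c) + \<i> * of_real (Im c)" by (simp add: complex_eq_iff)
    then have "sm c x = sm (of_real (Re c)) x + sm (\<i> * of_real (Im c)) x" using sm_addc[OF x] by metis
    also have "\<dots> = Re c *\<^sub>R x + sm \<i> (Im c *\<^sub>R x)"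
    proof -
      have "sm \<i> (Im c *\<^sub>R x) = sm \<i> (sm (of_real (Im c)) x)" using sm_real[OF x] by simp
      also have "\<dots> = sm (\<i> * of_real (Im c)) x" using sm_assoc[OF x] by simp
      finally show ?thesis using sm_real[OF x] by simp
    qed
    finally have "G (sm c x) = G (Re c *\<^sub>R x) + G (sm \<i> (Im c *\<^sub>R x))"
      using Gadd Ssc sm_closed x by simp
    also have "\<dots> = of_real (Re c) * G x + \<i> * (of_real (Im c) * G x)" using GR Gi Ssc x by simp
    also have "\<dots> = c * G x" by (simp add: complex_eq_iff algebra_simps)
    finally show ?thesis .
  qed
  have GM: "G x = F x" if x: "x \<in> M" for x
  proof -
    have "g (sm \<i> x) = Re (F (sm \<i> x))" using gM M(3)[OF x] f_def by simp
    also have "\<dots> = - Im (F x)" using Fsm[OF x] by simp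
    finally show ?thesis unfolding G_def using gM[OF x] f_def by (simp add: complex_eq_iff)
  qed
  have Gb: "cmod (G x) \<le> K * norm x" if x: "x \<in> S" for x
  proof (cases "G x = 0")
    case True then show ?thesis using K by simp
  next
    case False
    define u where "u = cnj (G x) / of_real (cmod (G x))"
    have u1: "cmod u = 1" using False unfolding u_def by (simp add: norm_divide)
    have "u * G x = of_real (cmod (G x))" using False unfolding u_def
      by (simp add: complex_norm_square[symmetric] power2_eq_square field_simps)
    then have "G (sm u x) = of_real (cmod (G x))" using Gsm[OF x] by simp
    then have "cmod (G x) = g (sm u x)" using ReG by (metis Re_complex_of_real)
    also have "\<dots> \<le> K * norm (sm u x)" using gb sm_closed x by blast
    also have "\<dots> = K * norm x" using sm_norm[OF x] u1 by simp
    finally show ?thesis .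
  qed
  show ?thesis using Gadd Gsm GM Gb by blast
qed

lemma hb_dist:
  fixes V :: "'v set" and a :: 'v
  assumes V: "rsub V" "V \<subseteq> S" "\<And>c v. v \<in> V \<Longrightarrow> sm c v \<in> V" and a: "a \<in> S"
    and d: "infdist a V > 0"
  shows "\<exists>G. (\<forall>x\<in>S. \<forall>y\<in>S. G (x + y) = G x + G y) \<and> (\<forall>x\<in>S. \<forall>c. G (sm c x) = c * G x)
            \<and> (\<forall>v\<in>V. G v = 0) \<and> G a = of_real (infdist a V) \<and> (\<forall>x\<in>S. cmod (G x) \<le> norm x)"
proof -
  define d where "d = infdist a V"
  have V0: "0 \<in> V" and Vadd: "\<And>x y. x \<in> V \<Longrightarrow> y \<in> V \<Longrightarrow> x + y \<in> V"
    and Vsc: "\<And>x t. x \<in> V \<Longrightarrow> t *\<^sub>R x \<in> V" using V(1) unfolding rsub_def by blast+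
  have Vneg: "\<And>x. x \<in> V \<Longrightarrow> - x \<in> V" using Vsc[of _ "-1"] by simp
  have Vdiff: "\<And>x y. x \<in> V \<Longrightarrow> y \<in> V \<Longrightarrow> x - y \<in> V" using Vadd Vneg by (metis diff_conv_add_uminus)
  have VS: "\<And>x. x \<in> V \<Longrightarrow> x \<in> S" using V(2) by blast
  have aV: "a \<notin> V" using d by auto
  have uniq: "c = c'" if "v \<in> V" "v' \<in> V" "v + sm c a = v' + sm c' a" for v v' c c'
  proof (rule ccontr)
    assume ne: "c \<noteq> c'"
    have "sm (c - c') a = sm c a - sm c' a" using sm_diffc[OF a] .
    also have "\<dots> = v' - v" using that(3) by (simp add: algebra_simps)
    finally have "sm (c - c') a = v' - v" .
    then have "sm (c - c') a \<in> V" using Vdiff that by simp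
    then have "sm (1 / (c - c')) (sm (c - c') a) \<in> V" using V(3) by blast
    also have "sm (1 / (c - c')) (sm (c - c') a) = a" using sm_assoc[OF a] sm_one[OF a] ne by simp
    finally show False using aV by simp
  qed
  define M where "M = {v + sm c a | v c. v \<in> V}"
  define F where "F x = (THE c. \<exists>v\<in>V. x = v + sm c a) * of_real d" for x
  have Fval: "F (v + sm c a) = c * of_real d" if v: "v \<in> V" for v c
  proof -
    have "(THE c'. \<exists>v'\<in>V. v + sm c a = v' + sm c' a) = c"
      by (rule the_equality) (use v uniq in blast)+
    then show ?thesis unfolding F_def by simp
  qed
  have MS: "M \<subseteq> S" unfolding M_def using VS sm_closed[OF a] Sadd by blast
  have Mrsub: "rsub M" unfolding rsub_def
  proof (intro conjI ballI allI)
    show "0 \<in> M" unfolding M_def using V0 sm_zeroc[OF a] by force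
  next
    fix x y assume "x \<in> M" "y \<in> M"
    then obtain v c v' c' where "x = v + sm c a" "y = v' + sm c' a" "v \<in> V" "v' \<in> V" unfolding M_def by blast
    moreover have "v + sm c a + (v' + sm c' a) = (v + v') + sm (c + c') a" using sm_addc[OF a] by (simp add: algebra_simps)
    ultimately show "x + y \<in> M" unfolding M_def using Vadd by blast
  next
    fix t x assume "x \<in> M"
    then obtain v c where "x = v + sm c a" "v \<in> V" unfolding M_def by blast
    moreover have "t *\<^sub>R (v + sm c a) = t *\<^sub>R v + sm (of_real t * c) a"
      using sm_real[OF sm_closed[OF a]] sm_assoc[OF a] by (simp add: scaleR_add_right)
    ultimately show "t *\<^sub>R x \<in> M" unfolding M_def using Vsc by blast
  qed
  have Msm: "sm e x \<in> M \<and> F (sm e x) = e * F x" if "x \<in> M" for x e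
  proof -
    obtain v c where x: "x = v + sm c a" "v \<in> V" using \<open>x \<in> M\<close> unfolding M_def by blast
    have "sm e x = sm e v + sm (e * c) a" using x sm_add[OF VS[OF x(2)] sm_closed[OF a]] sm_assoc[OF a] by simp
    then show ?thesis using x V(3)[OF x(2)] Fval unfolding M_def by auto
  qed
  have Fadd: "F (x + y) = F x + F y" if xyM: "x \<in> M" "y \<in> M" for x y
  proof -
    obtain v c v' c' where xy: "x = v + sm c a" "y = v' + sm c' a" "v \<in> V" "v' \<in> V" using xyM unfolding M_def by blast
    have e: "x + y = (v + v') + sm (c + c') a" using sm_addc[OF a] xy by (simp add: algebra_simps)
    have "F (x + y) = (c + c') * of_real d" unfolding e by (rule Fval) (rule Vadd[OF xy(3,4)])
    then show ?thesis using xy Fval by (simp add: distrib_right)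
  qed
  have d0: "d \<ge> 0" unfolding d_def by (rule infdist_nonneg)
  have Fb: "cmod (F x) \<le> 1 * norm x" if xM: "x \<in> M" for x
  proof -
    obtain v c where x: "x = v + sm c a" "v \<in> V" using xM unfolding M_def by blast
    show ?thesis
    proof (cases "c = 0")
      case True then show ?thesis using x Fval by simp
    next
      case False
      define w where "w = sm (1 / c) v"
      have w: "w \<in> V" unfolding w_def using V(3) x(2) by blast
      have "sm c w = v" unfolding w_def using sm_assoc[OF VS[OF x(2)]] sm_one[OF VS[OF x(2)]] False by simp
      then have "x = sm c (a - (- w))" using x sm_add[OF a VS[OF w]] by (simp add: add.commute)
      then have nx: "norm x = cmod c * dist a (- w)" using sm_norm a VS w Vneg Sdiff dist_norm by metis
      have "d \<le> dist a (- w)" unfolding d_def using Vneg[OF w] by (rule infdist_le)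
      then have "cmod c * d \<le> norm x" using nx by (simp add: mult_left_mono)
      then show ?thesis using x Fval d0 by (simp add: norm_mult)
    qed
  qed
  obtain G where Gadd: "\<forall>x\<in>S. \<forall>y\<in>S. G (x + y) = G x + G y" and Gsm: "\<forall>x\<in>S. \<forall>c. G (sm c x) = c * G x"
    and GM: "\<forall>x\<in>M. G x = F x" and Gb: "\<forall>x\<in>S. cmod (G x) \<le> 1 * norm x"
    using hb_complex[OF Mrsub MS _ _ Fadd _ Fb] Msm by force
  have ae: "a = 0 + sm 1 a" using sm_one[OF a] by simp
  have "a \<in> M" unfolding M_def using V0 ae by blast
  moreover have "F a = of_real d" using Fval[OF V0, of 1] ae by simp
  ultimately have Ga: "G a = of_real d" using GM by simp
  have GV: "G v = 0" if "v \<in> V" for v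
  proof -
    have ve: "v = v + sm 0 a" using sm_zeroc[OF a] by simp
    have "v \<in> M" unfolding M_def using that ve by blast
    moreover have "F v = 0" using Fval[OF that, of 0] ve by simp
    ultimately show ?thesis using GM by simp
  qed
  show ?thesis
    by (rule exI[of _ G]) (use Gadd Gsm Gb Ga GV in \<open>simp add: d_def\<close>)
qed

end

lemma scaleC_zero_right[simp]: "c *\<^sub>C (0::'a::complex_normed_vector) = 0"
proof -
  have "c *\<^sub>C (0::'a) = c *\<^sub>C 0 + c *\<^sub>C 0" using scaleC_add_right[of c "0::'a" 0] by simp
  then show ?thesis by simp
qed

lemma dual_smul_apply[simp]: "blinfun_apply (dual_smul c f) x = c * blinfun_apply f x"
  unfolding dual_smul_def by (simp add: mult.commute)

lemma cdualD: "f \<in> cdual \<Longrightarrow> blinfun_apply f (c *\<^sub>C x) = c * blinfun_apply f x"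
  unfolding cdual_def by blast

lemma cvs_A: "cvs (UNIV :: 'a::complex_normed_vector set) scaleC"
  by unfold_locales (auto simp: rsub_def scaleC_add_right scaleC_add_left scaleC_scaleC scaleR_scaleC norm_scaleC)

lemma norm_dual_smul: "norm (dual_smul c f) = cmod c * norm f"
proof (rule antisym)
  show "norm (dual_smul c f) \<le> cmod c * norm f"
    by (rule norm_blinfun_bound) (auto simp: norm_mult mult.assoc intro!: mult_left_mono norm_blinfun)
next
  show "cmod c * norm f \<le> norm (dual_smul c f)"
  proof (cases "c = 0")
    case True then show ?thesis by simp
  next
    case False
    have "norm f \<le> norm (dual_smul c f) / cmod c"
    proof (rule norm_blinfun_bound)
      show "0 \<le> norm (dual_smul c f) / cmod c" by simp
      fix x
      have "cmod (c * blinfun_apply f x) \<le> norm (dual_smul c f) * norm x"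
        using norm_blinfun[of "dual_smul c f" x] by simp
      then have "cmod c * cmod (blinfun_apply f x) \<le> norm (dual_smul c f) * norm x" by (simp add: norm_mult)
      then show "cmod (blinfun_apply f x) \<le> norm (dual_smul c f) / cmod c * norm x"
        using False by (simp add: field_simps)
    qed
    then show ?thesis using False by (simp add: field_simps)
  qed
qed

lemma cvs_D: "cvs (cdual :: ('a::complex_normed_vector \<Rightarrow>\<^sub>L complex) set) dual_smul"
proof unfold_locales
  show "rsub (cdual :: ('a \<Rightarrow>\<^sub>L complex) set)" unfolding rsub_def cdual_def
    by (auto simp: blinfun.bilinear_simps distrib_left scaleR_conv_of_real)
  fix x y :: "'a \<Rightarrow>\<^sub>L complex" and c d :: complex and r :: real
  show "x \<in> cdual \<Longrightarrow> dual_smul c x \<in> cdual" unfolding cdual_def by auto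
  show "dual_smul c (x + y) = dual_smul c x + dual_smul c y"
    by (rule blinfun_eqI) (simp add: blinfun.bilinear_simps distrib_left)
  show "dual_smul (c + d) x = dual_smul c x + dual_smul d x"
    by (rule blinfun_eqI) (simp add: blinfun.bilinear_simps distrib_right)
  show "dual_smul c (dual_smul d x) = dual_smul (c * d) x"
    by (rule blinfun_eqI) simp
  show "dual_smul (of_real r) x = r *\<^sub>R x"
    by (rule blinfun_eqI) (simp add: blinfun.scaleR_left scaleR_conv_of_real)
  show "norm (dual_smul c x) = cmod c * norm x" by (rule norm_dual_smul)
qed

lemma mk_dual:
  fixes G :: "'a::complex_normed_vector \<Rightarrow> complex"
  assumes add: "\<And>x y. G (x + y) = G x + G y" and hom: "\<And>x c. G (c *\<^sub>C x) = c * G x"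
    and bd: "\<And>x. cmod (G x) \<le> K * norm x" and K: "K \<ge> 0"
  shows "Blinfun G \<in> cdual \<and> blinfun_apply (Blinfun G) = G \<and> norm (Blinfun G) \<le> K"
proof -
  have bl: "bounded_linear G"
  proof (rule bounded_linear_intro[where K = K])
    show "G (x + y) = G x + G y" for x y by (rule add)
    show "G (r *\<^sub>R x) = r *\<^sub>R G x" for r x using hom[of "of_real r" x] by (simp add: scaleR_scaleC scaleC_complex_def)
    show "norm (G x) \<le> norm x * K" for x using bd[of x] by (simp add: mult.commute)
  qed
  have ap: "blinfun_apply (Blinfun G) = G" by (rule bounded_linear_Blinfun_apply[OF bl])
  show ?thesis
  proof (intro conjI)
    show "Blinfun G \<in> cdual" unfolding cdual_def using ap hom by simp
    show "blinfun_apply (Blinfun G) = G" by (rule ap)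
    show "norm (Blinfun G) \<le> K" by (rule norm_blinfun_bound) (use K bd ap in auto)
  qed
qed

lemma csub_rsub: "csubspace_in B sm V \<Longrightarrow> (\<And>c v. v \<in> V \<Longrightarrow> sm (of_real c) v = c *\<^sub>R v) \<Longrightarrow> rsub V"
  unfolding csubspace_in_def rsub_def by metis

lemma csubA: "csubspace_in UNIV scaleC (V :: 'a::complex_normed_vector set) \<Longrightarrow> rsub V"
  by (rule csub_rsub) (auto simp: scaleR_scaleC)

lemma hb_annih:
  fixes V :: "'a::complex_normed_vector set"
  assumes V: "csubspace_in UNIV scaleC V"
  shows "\<exists>\<phi>\<in>cdual. (\<forall>v\<in>V. blinfun_apply \<phi> v = 0) \<and> norm \<phi> \<le> 1 \<and> blinfun_apply \<phi> a = of_real (infdist a V)"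
proof (cases "infdist a V > 0")
  case False
  then have "infdist a V = 0" using infdist_nonneg[of a V] by linarith
  moreover have "(0 :: 'a \<Rightarrow>\<^sub>L complex) \<in> cdual" unfolding cdual_def by simp
  ultimately show ?thesis by (intro bexI[of _ 0]) auto
next
  case True
  have "\<exists>G. (\<forall>x\<in>UNIV. \<forall>y\<in>UNIV. G (x + y) = G x + G y) \<and> (\<forall>x\<in>UNIV. \<forall>c. G (c *\<^sub>C x) = c * G x)
            \<and> (\<forall>v\<in>V. G v = 0) \<and> G a = of_real (infdist a V) \<and> (\<forall>x\<in>UNIV. cmod (G x) \<le> norm x)"
    by (rule cvs.hb_dist[OF cvs_A csubA[OF V] _ _ _ True]) (use V in \<open>auto simp: csubspace_in_def\<close>)
  then obtain G where G: "\<forall>x y. G (x + y) = G x + G y" "\<forall>x c. G (c *\<^sub>C x) = c * G x"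
     "\<forall>v\<in>V. G v = 0" "G a = of_real (infdist a V)" "\<forall>x. cmod (G x) \<le> norm x" by blast
  have G5: "cmod (G x) \<le> 1 * norm x" for x using G(5) by simp
  from mk_dual[of G, OF _ _ G5] G(1,2) show ?thesis using G(3,4) by (intro bexI[of _ "Blinfun G"]) auto
qed

lemma hb_extend:
  fixes V :: "'a::complex_normed_vector set" and \<phi> :: "'a \<Rightarrow>\<^sub>L complex"
  assumes V: "csubspace_in UNIV scaleC V" and phi: "\<phi> \<in> cdual" and M0: "M0 \<ge> 0"
    and bd: "\<And>v. v \<in> V \<Longrightarrow> cmod (blinfun_apply \<phi> v) \<le> M0 * norm v"
  shows "\<exists>g\<in>cdual. (\<forall>v\<in>V. blinfun_apply g v = blinfun_apply \<phi> v) \<and> norm g \<le> M0"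
proof -
  have "\<exists>G. (\<forall>x\<in>UNIV. \<forall>y\<in>UNIV. G (x + y) = G x + G y) \<and> (\<forall>x\<in>UNIV. \<forall>c. G (c *\<^sub>C x) = c * G x)
            \<and> (\<forall>x\<in>V. G x = blinfun_apply \<phi> x) \<and> (\<forall>x\<in>UNIV. cmod (G x) \<le> M0 * norm x)"
    by (rule cvs.hb_complex[OF cvs_A csubA[OF V] _ _ M0])
       (use V phi bd in \<open>auto simp: csubspace_in_def cdual_def blinfun.bilinear_simps\<close>)
  then obtain G where G: "\<forall>x y. G (x + y) = G x + G y" "\<forall>x c. G (c *\<^sub>C x) = c * G x"
     "\<forall>v\<in>V. G v = blinfun_apply \<phi> v" "\<forall>x. cmod (G x) \<le> M0 * norm x" by blast
  from mk_dual[of G M0] G(1,2,4) M0 show ?thesis using G(3) by (intro bexI[of _ "Blinfun G"]) auto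
qed

lemma hb_bidual:
  fixes \<phi> :: "'a::complex_normed_vector \<Rightarrow>\<^sub>L complex"
  assumes phi: "\<phi> \<in> cdual"
  shows "\<exists>\<Psi>. (\<forall>f\<in>cdual. \<forall>g\<in>cdual. \<Psi> (f + g) = \<Psi> f + \<Psi> g) \<and> (\<forall>c. \<forall>f\<in>cdual. \<Psi> (dual_smul c f) = c * \<Psi> f)
          \<and> (\<forall>f\<in>cdual. cmod (\<Psi> f) \<le> norm f) \<and> \<Psi> \<phi> = of_real (norm \<phi>)"
proof (cases "\<phi> = 0")
  case True then show ?thesis by (intro exI[of _ "\<lambda>_. 0"]) auto
next
  case False
  have "\<exists>G. (\<forall>x\<in>cdual. \<forall>y\<in>cdual. G (x + y) = G x + G y) \<and> (\<forall>x\<in>cdual. \<forall>c. G (dual_smul c x) = c * G x)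
            \<and> (\<forall>v\<in>{0}. G v = 0) \<and> G \<phi> = of_real (infdist \<phi> {0}) \<and> (\<forall>x\<in>cdual. cmod (G x) \<le> norm x)"
    by (rule cvs.hb_dist[OF cvs_D _ _ _ phi]) (use False cvs.S0[OF cvs_D] cvs.sm_zero[OF cvs_D] in \<open>auto simp: rsub_def\<close>)
  then obtain G where G: "\<forall>x\<in>cdual. \<forall>y\<in>cdual. G (x + y) = G x + G y" "\<forall>x\<in>cdual. \<forall>c. G (dual_smul c x) = c * G x"
       "G \<phi> = of_real (infdist \<phi> {0})" "\<forall>x\<in>cdual. cmod (G x) \<le> norm x" by blast
  have "G \<phi> = of_real (norm \<phi>)" using G(3) by (simp add: dist_norm)
  then show ?thesis using G(1,2,4) by (intro exI[of _ G]) blast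
qed

lemma reflexive_attain:
  fixes \<phi> :: "'a::complex_normed_vector \<Rightarrow>\<^sub>L complex"
  assumes refl: "reflexive_space TYPE('a)" and phi: "\<phi> \<in> cdual"
  shows "\<exists>a. norm a \<le> 1 \<and> blinfun_apply \<phi> a = of_real (norm \<phi>)"
proof -
  obtain \<Psi> where P: "\<forall>f\<in>cdual. \<forall>g\<in>cdual. \<Psi> (f + g) = \<Psi> f + \<Psi> g" "\<forall>c. \<forall>f\<in>cdual. \<Psi> (dual_smul c f) = c * \<Psi> f"
    "\<forall>f\<in>cdual. cmod (\<Psi> f) \<le> norm f" "\<Psi> \<phi> = of_real (norm \<phi>)" using hb_bidual[OF phi] by blast
  have "\<exists>a::'a. \<forall>f\<in>cdual. \<Psi> f = blinfun_apply f a"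
    using refl unfolding reflexive_space_def using P(1,2,3) by (metis mult_1)
  then obtain a :: 'a where a: "\<And>f. f \<in> cdual \<Longrightarrow> \<Psi> f = blinfun_apply f a" by blast
  have c0: "csubspace_in UNIV scaleC ({0} :: 'a set)" unfolding csubspace_in_def by simp
  obtain f where f: "f \<in> cdual" "norm f \<le> 1" "blinfun_apply f a = of_real (infdist a {0})"
    using hb_annih[OF c0, of a] by blast
  have "norm a = cmod (blinfun_apply f a)" using f(3) by (simp add: dist_norm)
  also have "\<dots> = cmod (\<Psi> f)" using a f(1) by simp
  also have "\<dots> \<le> 1" using P(3) f by force
  finally show ?thesis using a phi P(4) by auto
qed

lemma infdist_lt:
  assumes "A \<noteq> {}" "infdist x A < r"
  shows "\<exists>a\<in>A. dist x a < r"
proof (rule ccontr)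
  assume "\<not> ?thesis"
  then have "\<forall>a\<in>A. r \<le> dist x a" by force
  then have "r \<le> infdist x A" unfolding infdist_notempty[OF assms(1)] using assms(1) by (intro cINF_greatest) auto
  then show False using assms(2) by simp
qed

locale qfib = cvs B sm for B :: "'b::banach set" and sm :: "complex \<Rightarrow> 'b \<Rightarrow> 'b" +
  fixes X :: "'x topology" and \<kappa> :: "'x \<Rightarrow> 'b set"
  assumes ksub_ax: "\<forall>x\<in>topspace X. csubspace_in B sm (\<kappa> x)"
begin

lemma ksub: "x \<in> topspace X \<Longrightarrow> csubspace_in B sm (\<kappa> x)"
  using ksub_ax by blast

lemma kB: "x \<in> topspace X \<Longrightarrow> \<kappa> x \<subseteq> B" and k0: "x \<in> topspace X \<Longrightarrow> 0 \<in> \<kappa> x"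
  and kadd: "x \<in> topspace X \<Longrightarrow> u \<in> \<kappa> x \<Longrightarrow> v \<in> \<kappa> x \<Longrightarrow> u + v \<in> \<kappa> x"
  and ksm: "x \<in> topspace X \<Longrightarrow> v \<in> \<kappa> x \<Longrightarrow> sm c v \<in> \<kappa> x"
  using ksub unfolding csubspace_in_def by blast+

lemma kneg: "x \<in> topspace X \<Longrightarrow> v \<in> \<kappa> x \<Longrightarrow> - v \<in> \<kappa> x"
  using ksm[of x v "-1"] sm_negone kB by fastforce

lemma kdiff: "x \<in> topspace X \<Longrightarrow> u \<in> \<kappa> x \<Longrightarrow> v \<in> \<kappa> x \<Longrightarrow> u - v \<in> \<kappa> x"
  using kadd[OF _ _ kneg] by (metis diff_conv_add_uminus)

lemma kne: "x \<in> topspace X \<Longrightarrow> \<kappa> x \<noteq> {}" using k0 by blast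

lemma krsub: "x \<in> topspace X \<Longrightarrow> rsub (\<kappa> x)"
  unfolding rsub_def using k0 kadd ksm[of x _ "of_real _"] sm_real kB by (metis subsetD)

lemma coset_eq:
  assumes x: "x \<in> topspace X"
  shows "coset \<kappa> x a = coset \<kappa> x b \<longleftrightarrow> a - b \<in> \<kappa> x"
proof
  assume "coset \<kappa> x a = coset \<kappa> x b"
  then have "(\<lambda>v. a + v) ` \<kappa> x = (\<lambda>v. b + v) ` \<kappa> x" unfolding coset_def by simp
  moreover have "a \<in> (\<lambda>v. a + v) ` \<kappa> x" using k0[OF x] by force
  ultimately obtain v where "v \<in> \<kappa> x" "a = b + v" by auto
  then show "a - b \<in> \<kappa> x" by simp
next
  assume ab: "a - b \<in> \<kappa> x"
  have "(\<lambda>v. a + v) ` \<kappa> x = (\<lambda>v. b + v) ` \<kappa> x"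
  proof (intro equalityI subsetI)
    fix y assume "y \<in> (\<lambda>v. a + v) ` \<kappa> x"
    then obtain v where v: "v \<in> \<kappa> x" "y = a + v" by blast
    then have "y = b + ((a - b) + v)" by simp
    then show "y \<in> (\<lambda>v. b + v) ` \<kappa> x" using kadd[OF x ab v(1)] by blast
  next
    fix y assume "y \<in> (\<lambda>v. b + v) ` \<kappa> x"
    then obtain v where v: "v \<in> \<kappa> x" "y = b + v" by blast
    then have "y = a + (v - (a - b))" by simp
    then show "y \<in> (\<lambda>v. a + v) ` \<kappa> x" using kdiff[OF x v(1) ab] by blast
  qed
  then show "coset \<kappa> x a = coset \<kappa> x b" unfolding coset_def by simp
qed

lemma fst_coset[simp]: "fst (coset \<kappa> x a) = x" unfolding coset_def by simp
lemma snd_coset: "snd (coset \<kappa> x a) = (\<lambda>v. a + v) ` \<kappa> x" unfolding coset_def by simp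

lemma Etot_iff: "e \<in> Etot X B \<kappa> \<longleftrightarrow> (\<exists>x a. x \<in> topspace X \<and> a \<in> B \<and> e = coset \<kappa> x a)"
  unfolding Etot_def by blast

lemma coset_Etot: "x \<in> topspace X \<Longrightarrow> a \<in> B \<Longrightarrow> coset \<kappa> x a \<in> Etot X B \<kappa>"
  unfolding Etot_def by blast

lemma infdist_shift:
  assumes x: "x \<in> topspace X" and v: "v \<in> \<kappa> x"
  shows "infdist (a + v) (\<kappa> x) = infdist a (\<kappa> x)"
proof -
  have "infdist (a + v) (\<kappa> x) \<le> infdist a (\<kappa> x)" if v: "v \<in> \<kappa> x" for a v
  proof -
    have "infdist (a + v) (\<kappa> x) \<le> dist (a + v) (w + v)" if "w \<in> \<kappa> x" for w
      using kadd[OF x that v] by (rule infdist_le)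
    then have "\<forall>w\<in>\<kappa> x. infdist (a + v) (\<kappa> x) \<le> dist a w" by (simp add: dist_norm)
    then show ?thesis unfolding infdist_notempty[OF kne[OF x], of a] using kne[OF x]
      by (intro cINF_greatest) auto
  qed
  from this[OF v, of a] this[OF kneg[OF x v], of "a + v"] show ?thesis by simp
qed

lemma Enorm_coset: assumes x: "x \<in> topspace X" shows "Enorm (coset \<kappa> x a) = infdist a (\<kappa> x)"
proof -
  have "Enorm (coset \<kappa> x a) = infdist 0 ((\<lambda>v. a + v) ` \<kappa> x)" unfolding Enorm_def coset_def by simp
  also have "\<dots> = (INF v\<in>\<kappa> x. dist 0 (a + v))"
    using kne[OF x] by (simp add: infdist_notempty image_image)
  also have "\<dots> = (INF v\<in>\<kappa> x. dist a (- v))"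
    by (simp add: dist_norm norm_minus_commute add.commute)
  also have "\<dots> = (INF w\<in>uminus ` \<kappa> x. dist a w)" by (simp add: image_image)
  also have "uminus ` \<kappa> x = \<kappa> x"
  proof (intro equalityI subsetI)
    fix w assume "w \<in> uminus ` \<kappa> x" then show "w \<in> \<kappa> x" using kneg[OF x] by blast
  next
    fix w assume "w \<in> \<kappa> x" then have "- w \<in> \<kappa> x" using kneg[OF x] by blast
    then show "w \<in> uminus ` \<kappa> x" by (metis image_eqI minus_minus)
  qed
  finally show ?thesis using kne[OF x] by (simp add: infdist_notempty)
qed

lemma Ezero_coset: "Ezero \<kappa> x = coset \<kappa> x 0" unfolding Ezero_def coset_def by simp

lemma Eadd_coset:
  assumes x: "x \<in> topspace X"
  shows "Eadd (coset \<kappa> x a) (coset \<kappa> x b) = coset \<kappa> x (a + b)"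
proof -
  have "{c + d |c d. c \<in> (\<lambda>v. a + v) ` \<kappa> x \<and> d \<in> (\<lambda>v. b + v) ` \<kappa> x} = (\<lambda>v. a + b + v) ` \<kappa> x"
  proof (intro equalityI subsetI)
    fix y assume "y \<in> {c + d |c d. c \<in> (\<lambda>v. a + v) ` \<kappa> x \<and> d \<in> (\<lambda>v. b + v) ` \<kappa> x}"
    then obtain u v where uv: "u \<in> \<kappa> x" "v \<in> \<kappa> x" "y = (a + u) + (b + v)" by blast
    then have "y = a + b + (u + v)" by (simp add: algebra_simps)
    then show "y \<in> (\<lambda>v. a + b + v) ` \<kappa> x" using kadd[OF x uv(1,2)] by blast
  next
    fix y assume "y \<in> (\<lambda>v. a + b + v) ` \<kappa> x"
    then obtain v where v: "v \<in> \<kappa> x" "y = a + b + v" by blast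
    then have "y = (a + v) + (b + 0)" by (simp add: algebra_simps)
    then show "y \<in> {c + d |c d. c \<in> (\<lambda>v. a + v) ` \<kappa> x \<and> d \<in> (\<lambda>v. b + v) ` \<kappa> x}"
      using v(1) k0[OF x] by blast
  qed
  then show ?thesis unfolding Eadd_def coset_def by simp
qed

lemma Esmul_coset:
  assumes x: "x \<in> topspace X" and a: "a \<in> B"
  shows "Esmul sm \<kappa> c (coset \<kappa> x a) = coset \<kappa> x (sm c a)"
proof -
  have "{sm c a' + v |a' v. a' \<in> (\<lambda>v. a + v) ` \<kappa> x \<and> v \<in> \<kappa> x} = (\<lambda>v. sm c a + v) ` \<kappa> x"
  proof (intro equalityI subsetI)
    fix y assume "y \<in> {sm c a' + v |a' v. a' \<in> (\<lambda>v. a + v) ` \<kappa> x \<and> v \<in> \<kappa> x}"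
    then obtain u v where uv: "u \<in> \<kappa> x" "v \<in> \<kappa> x" "y = sm c (a + u) + v" by blast
    have "sm c (a + u) = sm c a + sm c u" using sm_add[OF a, of u c] kB[OF x] uv(1) by blast
    then have "y = sm c a + (sm c u + v)" using uv(3) by (simp add: algebra_simps)
    then show "y \<in> (\<lambda>v. sm c a + v) ` \<kappa> x" using kadd[OF x ksm[OF x uv(1)] uv(2)] by blast
  next
    fix y assume "y \<in> (\<lambda>v. sm c a + v) ` \<kappa> x"
    then obtain v where v: "v \<in> \<kappa> x" "y = sm c a + v" by blast
    then have "y = sm c (a + 0) + v" by simp
    then show "y \<in> {sm c a' + v |a' v. a' \<in> (\<lambda>v. a + v) ` \<kappa> x \<and> v \<in> \<kappa> x}"
      using v(1) k0[OF x] by blast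
  qed
  then show ?thesis unfolding Esmul_def coset_def by simp
qed

lemma Esub_coset:
  assumes x: "x \<in> topspace X" and a: "a \<in> B" and b: "b \<in> B"
  shows "Esub sm \<kappa> (coset \<kappa> x a) (coset \<kappa> x b) = coset \<kappa> x (a - b)"
  unfolding Esub_def using Esmul_coset[OF x b] Eadd_coset[OF x] sm_negone[OF b] by simp

lemma Eopen_Etot: "Eopen X B \<kappa> (Etot X B \<kappa>)"
proof -
  have "{p \<in> B \<times> topspace X. coset \<kappa> (snd p) (fst p) \<in> Etot X B \<kappa>} = B \<times> topspace X"
    using coset_Etot by auto
  moreover have "openin (prod_topology (subtopology euclidean B) X) (B \<times> topspace X)"
    by (metis openin_topspace topspace_euclidean_subtopology topspace_prod_topology)
  ultimately show ?thesis unfolding Eopen_def by simp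
qed

lemma openin_Etop: "openin (Etop X B \<kappa>) U \<longleftrightarrow> Eopen X B \<kappa> U"
proof -
  have "openin (topology (Eopen X B \<kappa>)) = Eopen X B \<kappa>" by (rule topology_inverse'[OF istopology_Eopen])
  then show ?thesis unfolding Etop_def by simp
qed

lemma topspace_Etop: "topspace (Etop X B \<kappa>) = Etot X B \<kappa>"
proof -
  have "topspace (Etop X B \<kappa>) = \<Union>{U. Eopen X B \<kappa> U}" unfolding topspace_def openin_Etop by simp
  also have "\<dots> = Etot X B \<kappa>" using Eopen_Etot unfolding Eopen_def by blast
  finally show ?thesis .
qed

end

locale qbun = qfib B sm X \<kappa> for B :: "'b::banach set" and sm and X :: "'x topology" and \<kappa> +
  assumes Bclosed: "closed B" and qvb: "quotient_vector_bundle X B sm \<kappa>"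
begin

lemma lsc_k:
  assumes x: "x \<in> topspace X" and v: "v \<in> \<kappa> x" and r: "r > 0"
  shows "\<exists>N. openin X N \<and> x \<in> N \<and> (\<forall>y\<in>N. \<exists>w\<in>\<kappa> y. dist v w < r)"
proof -
  define U where "U = B \<inter> ball v r"
  have U: "openin (subtopology euclidean B) U" unfolding U_def by (simp add: openin_open_Int)
  define W where "W = {V. csubspace_in B sm V \<and> V \<inter> U \<noteq> {}}"
  have "openin (lower_vietoris B sm) W" unfolding lower_vietoris_def openin_topology_generated_by_iff
    by (rule generate_topology_on.Basis) (use U W_def in blast)
  then have N: "openin X {y \<in> topspace X. \<kappa> y \<in> W}"
    using qvb unfolding quotient_vector_bundle_def by (blast intro: openin_continuous_map_preimage)
  have "v \<in> B" using kB[OF x] v by blast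
  then have "\<kappa> x \<in> W" unfolding W_def U_def using ksub[OF x] v r by auto
  moreover have "\<forall>y\<in>{y \<in> topspace X. \<kappa> y \<in> W}. \<exists>w\<in>\<kappa> y. dist v w < r"
    unfolding W_def U_def by (auto simp: dist_commute)
  ultimately show ?thesis using N x by blast
qed

lemma usc_norm: "openin X {y \<in> topspace X. infdist a (\<kappa> y) < t}"
proof (subst openin_subopen, intro ballI)
  fix x assume "x \<in> {y \<in> topspace X. infdist a (\<kappa> y) < t}"
  then have x: "x \<in> topspace X" and lt: "infdist a (\<kappa> x) < t" by auto
  obtain v where v: "v \<in> \<kappa> x" "dist a v < t" using infdist_lt[OF kne[OF x] lt] by blast
  obtain N where N: "openin X N" "x \<in> N" "\<forall>y\<in>N. \<exists>w\<in>\<kappa> y. dist v w < t - dist a v"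
    using lsc_k[OF x v(1), of "t - dist a v"] v(2) by auto
  have "N \<subseteq> {y \<in> topspace X. infdist a (\<kappa> y) < t}"
  proof
    fix y assume y: "y \<in> N"
    then obtain w where w: "w \<in> \<kappa> y" "dist v w < t - dist a v" using N(3) by blast
    have "infdist a (\<kappa> y) \<le> dist a w" using w(1) by (rule infdist_le)
    also have "\<dots> \<le> dist a v + dist v w" by (rule dist_triangle)
    finally have "infdist a (\<kappa> y) < t" using w(2) by linarith
    moreover have "y \<in> topspace X" using openin_subset[OF N(1)] y by blast
    ultimately show "y \<in> {y \<in> topspace X. infdist a (\<kappa> y) < t}" by blast
  qed
  then show "\<exists>T. openin X T \<and> x \<in> T \<and> T \<subseteq> {y \<in> topspace X. infdist a (\<kappa> y) < t}" using N by blast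
qed

lemma prod_nbhd:
  assumes P: "openin (prod_topology (subtopology euclidean B) X) P" and ax: "(a, x) \<in> P"
  shows "\<exists>r>0. \<exists>N. openin X N \<and> x \<in> N \<and> (\<forall>b\<in>B. \<forall>y\<in>N. dist b a < r \<longrightarrow> (b, y) \<in> P)"
proof -
  have h: "\<forall>x y. (x,y) \<in> P \<longrightarrow> (\<exists>U V. openin (subtopology euclidean B) U \<and> openin X V \<and> x \<in> U \<and> y \<in> V \<and> U \<times> V \<subseteq> P)"
    using P by (simp only: openin_prod_topology_alt)
  obtain U V where UV: "openin (subtopology euclidean B) U" "openin X V" "a \<in> U" "x \<in> V" "U \<times> V \<subseteq> P"
    using mp[OF spec[OF spec[OF h]] ax] by (elim exE conjE)
  have h2: "\<forall>a\<in>U. \<exists>e>0. \<forall>b\<in>B. dist b a < e \<longrightarrow> b \<in> U"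
    using UV(1) unfolding openin_euclidean_subtopology_iff by (elim conjE)
  obtain r where r: "r > 0" "\<forall>b\<in>B. dist b a < r \<longrightarrow> b \<in> U"
    using bspec[OF h2 UV(3)] by (elim exE conjE)
  have "\<forall>b\<in>B. \<forall>y\<in>V. dist b a < r \<longrightarrow> (b, y) \<in> P"
  proof (intro ballI impI)
    fix b y assume "b \<in> B" "y \<in> V" "dist b a < r"
    then have "(b, y) \<in> U \<times> V" using r(2) by blast
    with UV(5) show "(b, y) \<in> P" by (rule subsetD)
  qed
  then show ?thesis using r(1) UV(2,4) by blast
qed

lemma Eopen_image:
  assumes A: "openin (subtopology euclidean B) A" and N: "openin X N"
  shows "Eopen X B \<kappa> {coset \<kappa> y a | a y. a \<in> A \<and> y \<in> N}"
proof -
  have AB: "A \<subseteq> B" using A by (simp add: openin_euclidean_subtopology_iff)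
  have NX: "N \<subseteq> topspace X" using N by (rule openin_subset)
  define I where "I = {coset \<kappa> y a | a y. a \<in> A \<and> y \<in> N}"
  have IE: "I \<subseteq> Etot X B \<kappa>"
  proof
    fix e assume "e \<in> I"
    then obtain a y where "a \<in> A" "y \<in> N" "e = coset \<kappa> y a" unfolding I_def by blast
    then show "e \<in> Etot X B \<kappa>" using coset_Etot[of y a] AB NX by blast
  qed
  define P where "P = {p \<in> B \<times> topspace X. coset \<kappa> (snd p) (fst p) \<in> I}"
  have "openin (prod_topology (subtopology euclidean B) X) P"
    unfolding openin_prod_topology_alt
  proof (intro allI impI)
    fix b0 y0 assume "(b0, y0) \<in> P"
    then have b0: "b0 \<in> B" and y0: "y0 \<in> topspace X" and "coset \<kappa> y0 b0 \<in> I" unfolding P_def by auto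
    then obtain a0 y where a0: "a0 \<in> A" "y \<in> N" "coset \<kappa> y0 b0 = coset \<kappa> y a0" unfolding I_def by auto
    have yy: "y = y0" using arg_cong[OF a0(3), of fst] by simp
    then have "b0 - a0 \<in> \<kappa> y0" using a0(3) coset_eq[OF y0] by simp
    then have v0: "a0 - b0 \<in> \<kappa> y0" using kneg[OF y0] by fastforce
    obtain r where r: "r > 0" "\<forall>b\<in>B. dist b a0 < r \<longrightarrow> b \<in> A"
      using A a0(1) unfolding openin_euclidean_subtopology_iff by blast
    obtain N' where N': "openin X N'" "y0 \<in> N'" "\<forall>y\<in>N'. \<exists>w\<in>\<kappa> y. dist (a0 - b0) w < r / 2"
      using lsc_k[OF y0 v0, of "r/2"] r(1) by auto
    define U' where "U' = B \<inter> ball b0 (r/2)"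
    have U': "openin (subtopology euclidean B) U'" unfolding U'_def by (simp add: openin_open_Int)
    have "U' \<times> (N \<inter> N') \<subseteq> P"
    proof
      fix p assume "p \<in> U' \<times> (N \<inter> N')"
      then obtain b y where p: "p = (b, y)" and b: "b \<in> U'" and y: "y \<in> N \<inter> N'" by blast
      then have yX: "y \<in> topspace X" using NX by blast
      obtain w where w: "w \<in> \<kappa> y" "dist (a0 - b0) w < r / 2" using N'(3) y by blast
      have bB: "b \<in> B" using b U'_def by blast
      have wB: "w \<in> B" using kB[OF yX] w(1) by blast
      have eq: "b + w - a0 = (b - b0) + (w - (a0 - b0))" by (simp add: algebra_simps)
      have "dist (b + w) a0 \<le> dist b b0 + dist w (a0 - b0)"
        unfolding dist_norm eq by (rule norm_triangle_ineq)
      also have "\<dots> < r" using b w(2) unfolding U'_def by (simp add: dist_commute)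
      finally have "b + w \<in> A" using r(2) Sadd[OF bB wB] by blast
      moreover have "coset \<kappa> y b = coset \<kappa> y (b + w)" using coset_eq[OF yX] kneg[OF yX w(1)] by simp
      ultimately have "coset \<kappa> y b \<in> I" unfolding I_def using y by force
      then show "p \<in> P" unfolding P_def using bB yX p by simp
    qed
    moreover have "b0 \<in> U'" using b0 r(1) unfolding U'_def by simp
    moreover have "openin X (N \<inter> N')" using N N'(1) by blast
    moreover have "y0 \<in> N \<inter> N'" using a0(2) yy N'(2) by blast
    ultimately show "\<exists>U V. openin (subtopology euclidean B) U \<and> openin X V \<and> b0 \<in> U \<and> y0 \<in> V \<and> U \<times> V \<subseteq> P"
      using U' by blast
  qed
  then show ?thesis unfolding Eopen_def I_def[symmetric] P_def using IE by blast
qed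

end

context qbun
begin

lemma Etot_cases:
  assumes "e \<in> Etot X B \<kappa>"
  obtains y a where "y \<in> topspace X" "a \<in> B" "e = coset \<kappa> y a"
  using assms unfolding Etot_def by auto

lemma fibre_zero:
  assumes x: "x \<in> topspace X" and cl: "closed (\<kappa> x)" and e: "e \<in> Etot X B \<kappa>" "fst e = x" "Enorm e = 0"
  shows "e = Ezero \<kappa> x"
proof -
  obtain y a where a0: "y \<in> topspace X" "a \<in> B" "e = coset \<kappa> y a" using Etot_cases[OF e(1)] by blast
  then have "y = x" using e(2) by simp
  then have a: "a \<in> B" "e = coset \<kappa> x a" using a0 by auto
  have "infdist a (\<kappa> x) = 0" using e(3) a Enorm_coset[OF x] by simp
  then have "a \<in> \<kappa> x" using in_closed_iff_infdist_zero[OF cl kne[OF x]] by simp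
  then have "coset \<kappa> x a = coset \<kappa> x 0" using coset_eq[OF x] by simp
  then show ?thesis using a Ezero_coset by simp
qed

lemma nets_zero:
  assumes x: "x \<in> topspace X" and ev: "eventually (\<lambda>e. e \<in> Etot X B \<kappa>) F"
    and nz: "(Enorm \<longlongrightarrow> 0) F" and lim: "limitin X fst x F"
  shows "limitin (Etop X B \<kappa>) (\<lambda>e. e) (Ezero \<kappa> x) F"
  unfolding limitin_def
proof (intro conjI allI impI)
  show "Ezero \<kappa> x \<in> topspace (Etop X B \<kappa>)" using coset_Etot[OF x S0] Ezero_coset topspace_Etop by simp
  fix U assume U: "openin (Etop X B \<kappa>) U \<and> Ezero \<kappa> x \<in> U"
  define P where "P = {p \<in> B \<times> topspace X. coset \<kappa> (snd p) (fst p) \<in> U}"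
  have P: "openin (prod_topology (subtopology euclidean B) X) P" using U unfolding openin_Etop Eopen_def P_def by blast
  have "(0, x) \<in> P" unfolding P_def using U x S0 Ezero_coset by simp
  from prod_nbhd[OF P this] obtain r N where rN: "r > 0" "openin X N" "x \<in> N"
    "\<forall>b\<in>B. \<forall>y\<in>N. dist b 0 < r \<longrightarrow> (b, y) \<in> P" by blast
  have e1: "eventually (\<lambda>e. fst e \<in> N) F" using lim rN(2,3) unfolding limitin_def by blast
  have e2: "eventually (\<lambda>e. Enorm e < r) F" using order_tendstoD(2)[OF nz rN(1)] .
  show "eventually (\<lambda>e. e \<in> U) F"
    using ev e1 e2
  proof eventually_elim
    case (elim e)
    obtain y a where a: "y \<in> topspace X" "a \<in> B" "e = coset \<kappa> y a" using Etot_cases[OF elim(1)] by blast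
    have fe: "fst e = y" using a(3) by simp
    have yN: "y \<in> N" using elim(2) fe by simp
    have "Enorm e = infdist a (\<kappa> y)" using Enorm_coset[OF a(1)] a(3) by simp
    then have "infdist a (\<kappa> y) < r" using elim(3) by simp
    then obtain v where v: "v \<in> \<kappa> y" "dist a v < r" using infdist_lt[OF kne[OF a(1)]] by blast
    have vB: "v \<in> B" using kB[OF a(1)] v(1) by blast
    have avB: "a - v \<in> B" using Sdiff[OF a(2) vB] .
    have "dist (a - v) 0 < r" using v(2) by (simp add: dist_norm)
    then have "(a - v, y) \<in> P" using rN(4) avB yN by blast
    then have "coset \<kappa> y (a - v) \<in> U" unfolding P_def by simp
    moreover have "coset \<kappa> y (a - v) = coset \<kappa> y a" using coset_eq[OF a(1)] kneg[OF a(1) v(1)] by simp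
    ultimately show ?case using a(3) by simp
  qed
qed

lemma coset_fst: "fst e = y \<Longrightarrow> e = coset \<kappa> y' a \<Longrightarrow> y' = y" by simp

lemma ball_image_open:
  assumes N: "openin X N"
  shows "openin (Etop X B \<kappa>) {coset \<kappa> y a' | a' y. a' \<in> B \<inter> ball a r \<and> y \<in> N}"
  unfolding openin_Etop by (rule Eopen_image[OF _ N]) (simp add: openin_open_Int)

lemma add_cont:
  "continuous_map
     (subtopology (prod_topology (Etop X B \<kappa>) (Etop X B \<kappa>))
        {(e, f). e \<in> Etot X B \<kappa> \<and> f \<in> Etot X B \<kappa> \<and> fst e = fst f})
     (Etop X B \<kappa>) (\<lambda>(e, f). Eadd e f)"
proof -
  define Fib where "Fib = {(e, f). e \<in> Etot X B \<kappa> \<and> f \<in> Etot X B \<kappa> \<and> fst e = fst f}"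
  have "continuous_map (subtopology (prod_topology (Etop X B \<kappa>) (Etop X B \<kappa>)) Fib) (Etop X B \<kappa>) (\<lambda>(e, f). Eadd e f)"
  unfolding continuous_map_def
proof (intro conjI allI impI Pi_I)
  have top: "topspace (subtopology (prod_topology (Etop X B \<kappa>) (Etop X B \<kappa>)) Fib) = Fib"
    unfolding Fib_def by (auto simp: topspace_Etop)
  have repr: "\<exists>y a b. y \<in> topspace X \<and> a \<in> B \<and> b \<in> B \<and> p = (coset \<kappa> y a, coset \<kappa> y b)" if pF: "p \<in> Fib" for p
  proof -
    obtain e f where p: "p = (e, f)" "e \<in> Etot X B \<kappa>" "f \<in> Etot X B \<kappa>" "fst e = fst f" using pF Fib_def by blast
    obtain y a where a: "y \<in> topspace X" "a \<in> B" "e = coset \<kappa> y a" using Etot_cases[OF p(2)] by blast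
    obtain y' b where b: "y' \<in> topspace X" "b \<in> B" "f = coset \<kappa> y' b" using Etot_cases[OF p(3)] by blast
    have "y' = y" using p(4) a(3) b(3) by simp
    then show ?thesis using a b p(1) by blast
  qed
  {
    fix p assume "p \<in> topspace (subtopology (prod_topology (Etop X B \<kappa>) (Etop X B \<kappa>)) Fib)"
    then obtain y a b where p: "y \<in> topspace X" "a \<in> B" "b \<in> B" "p = (coset \<kappa> y a, coset \<kappa> y b)"
      using repr top by blast
    show "(\<lambda>(e, f). Eadd e f) p \<in> topspace (Etop X B \<kappa>)"
      using p Eadd_coset[OF p(1)] coset_Etot[OF p(1) Sadd[OF p(2,3)]] topspace_Etop by simp
  }
  fix U assume U: "openin (Etop X B \<kappa>) U"
  define P where "P = {p \<in> B \<times> topspace X. coset \<kappa> (snd p) (fst p) \<in> U}"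
  have P: "openin (prod_topology (subtopology euclidean B) X) P" using U unfolding openin_Etop Eopen_def P_def by blast
  define S where "S = {p \<in> topspace (subtopology (prod_topology (Etop X B \<kappa>) (Etop X B \<kappa>)) Fib). (\<lambda>(e, f). Eadd e f) p \<in> U}"
  have "openin (subtopology (prod_topology (Etop X B \<kappa>) (Etop X B \<kappa>)) Fib) S"
  proof (subst openin_subopen, intro ballI)
    fix p assume pS: "p \<in> S"
    then have "p \<in> Fib" using top S_def by blast
    then obtain y a b where p: "y \<in> topspace X" "a \<in> B" "b \<in> B" "p = (coset \<kappa> y a, coset \<kappa> y b)"
      using repr by blast
    have "coset \<kappa> y (a + b) \<in> U" using pS p Eadd_coset[OF p(1)] S_def by simp
    then have "(a + b, y) \<in> P" unfolding P_def using p Sadd by simp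
    from prod_nbhd[OF P this] obtain r N where rN: "r > 0" "openin X N" "y \<in> N"
      "\<forall>c\<in>B. \<forall>z\<in>N. dist c (a + b) < r \<longrightarrow> (c, z) \<in> P" by blast
    define O1 where "O1 = {coset \<kappa> z a' | a' z. a' \<in> B \<inter> ball a (r/2) \<and> z \<in> N}"
    define O2 where "O2 = {coset \<kappa> z b' | b' z. b' \<in> B \<inter> ball b (r/2) \<and> z \<in> N}"
    have O1: "openin (Etop X B \<kappa>) O1" unfolding O1_def by (rule ball_image_open[OF rN(2)])
    have O2: "openin (Etop X B \<kappa>) O2" unfolding O2_def by (rule ball_image_open[OF rN(2)])
    define T where "T = (O1 \<times> O2) \<inter> Fib"
    have T: "openin (subtopology (prod_topology (Etop X B \<kappa>) (Etop X B \<kappa>)) Fib) T"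
      unfolding T_def by (rule openin_subtopology_Int) (simp add: openin_prod_Times_iff O1 O2)
    have "coset \<kappa> y a \<in> O1" unfolding O1_def using p(2) rN(1,3) by force
    moreover have "coset \<kappa> y b \<in> O2" unfolding O2_def using p(3) rN(1,3) by force
    ultimately have pT: "p \<in> T" unfolding T_def using p(4) \<open>p \<in> Fib\<close> by simp
    have TS: "T \<subseteq> S"
    proof
      fix q assume q: "q \<in> T"
      then have qF: "q \<in> Fib" unfolding T_def by blast
      then obtain z a' b' where qq: "z \<in> topspace X" "a' \<in> B" "b' \<in> B" "q = (coset \<kappa> z a', coset \<kappa> z b')"
        using repr by blast
      obtain a'' z1 where 1: "a'' \<in> B \<inter> ball a (r/2)" "z1 \<in> N" "coset \<kappa> z a' = coset \<kappa> z1 a''"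
        using q qq(4) unfolding T_def O1_def by auto
      obtain b'' z2 where 2: "b'' \<in> B \<inter> ball b (r/2)" "z2 \<in> N" "coset \<kappa> z b' = coset \<kappa> z2 b''"
        using q qq(4) unfolding T_def O2_def by auto
      have z1: "z1 = z" using arg_cong[OF 1(3), of fst] by simp
      have z2: "z2 = z" using arg_cong[OF 2(3), of fst] by simp
      have "Eadd (coset \<kappa> z a') (coset \<kappa> z b') = coset \<kappa> z (a'' + b'')"
        using Eadd_coset[OF qq(1)] 1(3) 2(3) z1 z2 by simp
      moreover have "dist (a'' + b'') (a + b) < r"
      proof -
        have "dist (a'' + b'') (a + b) \<le> dist a'' a + dist b'' b"
          by (simp add: dist_norm) (metis add_diff_add norm_triangle_ineq)
        also have "\<dots> < r" using 1(1) 2(1) by (simp add: dist_commute)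
        finally show ?thesis .
      qed
      then have "(a'' + b'', z) \<in> P" using rN(4) Sadd 1(1) 2(1) 1(2) z1 by blast
      ultimately have "Eadd (coset \<kappa> z a') (coset \<kappa> z b') \<in> U" unfolding P_def by simp
      then show "q \<in> S" unfolding S_def using qF top qq(4) by simp
    qed
    show "\<exists>T. openin (subtopology (prod_topology (Etop X B \<kappa>) (Etop X B \<kappa>)) Fib) T \<and> p \<in> T \<and> T \<subseteq> S"
      using T pT TS by blast
  qed
  then show "openin (subtopology (prod_topology (Etop X B \<kappa>) (Etop X B \<kappa>)) Fib)
     {x \<in> topspace (subtopology (prod_topology (Etop X B \<kappa>) (Etop X B \<kappa>)) Fib). (\<lambda>(e, f). Eadd e f) x \<in> U}"
    unfolding S_def .
qed
  then show ?thesis unfolding Fib_def .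
qed

lemma sm_est:
  assumes a: "a \<in> B" and a0: "a0 \<in> B"
  shows "norm (sm c a - sm c0 a0) \<le> cmod c * norm (a - a0) + cmod (c - c0) * norm a0"
proof -
  have "sm c a - sm c0 a0 = sm c (a - a0) + sm (c - c0) a0"
    using sm_diff[OF a a0] sm_diffc[OF a0] by simp
  then have "norm (sm c a - sm c0 a0) \<le> norm (sm c (a - a0)) + norm (sm (c - c0) a0)"
    by (simp add: norm_triangle_ineq)
  also have "\<dots> = cmod c * norm (a - a0) + cmod (c - c0) * norm a0"
    using sm_norm Sdiff[OF a a0] a0 by simp
  finally show ?thesis .
qed

lemma sm_cont_delta:
  assumes a0: "a0 \<in> B" and r: "r > 0"
  shows "\<exists>\<delta>>0. \<forall>c a. a \<in> B \<longrightarrow> dist c c0 < \<delta> \<longrightarrow> dist a a0 < \<delta> \<longrightarrow> dist (sm c a) (sm c0 a0) < r"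
proof -
  define K where "K = cmod c0 + 1 + norm a0"
  have K: "K > 0" unfolding K_def using norm_ge_zero[of c0] norm_ge_zero[of a0] by linarith
  define \<delta> where "\<delta> = min 1 (r / (2 * K))"
  have d: "\<delta> > 0" unfolding \<delta>_def using r K by simp
  have dK: "\<delta> * K \<le> r / 2" unfolding \<delta>_def using K r by (simp add: min_def field_simps)
  show ?thesis
  proof (intro exI[of _ \<delta>] conjI allI impI d)
    fix c a assume a: "a \<in> B" and c: "dist c c0 < \<delta>" and aa: "dist a a0 < \<delta>"
    have cc: "cmod c \<le> cmod c0 + 1"
    proof -
      have "cmod c \<le> cmod c0 + cmod (c - c0)" by (metis add.commute diff_add_cancel norm_triangle_ineq)
      moreover have "cmod (c - c0) < 1" using c unfolding \<delta>_def by (simp add: dist_norm)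
      ultimately show ?thesis by simp
    qed
    have "dist (sm c a) (sm c0 a0) \<le> cmod c * norm (a - a0) + cmod (c - c0) * norm a0"
      using sm_est[OF a a0] by (simp add: dist_norm)
    also have "\<dots> \<le> (cmod c0 + 1) * \<delta> + \<delta> * norm a0"
    proof (rule add_mono)
      show "cmod c * norm (a - a0) \<le> (cmod c0 + 1) * \<delta>"
        using cc aa by (intro mult_mono) (auto simp: dist_norm)
      show "cmod (c - c0) * norm a0 \<le> \<delta> * norm a0"
        using c by (intro mult_right_mono) (auto simp: dist_norm)
    qed
    also have "\<dots> = \<delta> * K" unfolding K_def by (simp add: algebra_simps)
    also have "\<dots> < r" using dK r by simp
    finally show "dist (sm c a) (sm c0 a0) < r" .
  qed
qed

lemma smul_cont: "continuous_map (prod_topology euclidean (Etop X B \<kappa>)) (Etop X B \<kappa>) (\<lambda>(c, e). Esmul sm \<kappa> c e)"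
  unfolding continuous_map_def
proof (intro conjI allI impI Pi_I)
  have top: "topspace (prod_topology (euclidean :: complex topology) (Etop X B \<kappa>)) = UNIV \<times> Etot X B \<kappa>"
    by (simp add: topspace_Etop)
  {
    fix p :: "complex \<times> ('x \<times> 'b set)" assume "p \<in> topspace (prod_topology euclidean (Etop X B \<kappa>))"
    then obtain c e where p: "p = (c, e)" "e \<in> Etot X B \<kappa>" using top by auto
    obtain y a where a: "y \<in> topspace X" "a \<in> B" "e = coset \<kappa> y a" using Etot_cases[OF p(2)] by blast
    show "(\<lambda>(c, e). Esmul sm \<kappa> c e) p \<in> topspace (Etop X B \<kappa>)"
      using p a Esmul_coset[OF a(1,2)] coset_Etot[OF a(1) sm_closed[OF a(2)]] topspace_Etop by simp
  }
  fix U assume U: "openin (Etop X B \<kappa>) U"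
  define P where "P = {p \<in> B \<times> topspace X. coset \<kappa> (snd p) (fst p) \<in> U}"
  have P: "openin (prod_topology (subtopology euclidean B) X) P" using U unfolding openin_Etop Eopen_def P_def by blast
  define S where "S = {p \<in> topspace (prod_topology (euclidean :: complex topology) (Etop X B \<kappa>)). (\<lambda>(c, e). Esmul sm \<kappa> c e) p \<in> U}"
  have "openin (prod_topology euclidean (Etop X B \<kappa>)) S"
  proof (subst openin_subopen, intro ballI)
    fix p assume pS: "p \<in> S"
    then obtain c0 e where p: "p = (c0, e)" "e \<in> Etot X B \<kappa>" using top S_def by auto
    obtain y a0 where a: "y \<in> topspace X" "a0 \<in> B" "e = coset \<kappa> y a0" using Etot_cases[OF p(2)] by blast
    have "coset \<kappa> y (sm c0 a0) \<in> U" using pS p a Esmul_coset[OF a(1,2)] S_def by simp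
    then have "(sm c0 a0, y) \<in> P" unfolding P_def using a sm_closed by simp
    from prod_nbhd[OF P this] obtain r N where rN: "r > 0" "openin X N" "y \<in> N"
      "\<forall>b\<in>B. \<forall>z\<in>N. dist b (sm c0 a0) < r \<longrightarrow> (b, z) \<in> P" by blast
    obtain \<delta> where d: "\<delta> > 0" "\<And>c a. a \<in> B \<Longrightarrow> dist c c0 < \<delta> \<Longrightarrow> dist a a0 < \<delta> \<Longrightarrow> dist (sm c a) (sm c0 a0) < r"
      using sm_cont_delta[OF a(2) rN(1), of c0] by blast
    define Onb where "Onb = {coset \<kappa> z a' | a' z. a' \<in> B \<inter> ball a0 \<delta> \<and> z \<in> N}"
    have Onb: "openin (Etop X B \<kappa>) Onb" unfolding Onb_def by (rule ball_image_open[OF rN(2)])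
    define T where "T = ball c0 \<delta> \<times> Onb"
    have T: "openin (prod_topology euclidean (Etop X B \<kappa>)) T"
      unfolding T_def by (simp add: openin_prod_Times_iff Onb)
    have "e \<in> Onb" unfolding Onb_def using a d(1) rN(3) by force
    then have pT: "p \<in> T" unfolding T_def using p d(1) by simp
    have TS: "T \<subseteq> S"
    proof
      fix q assume q: "q \<in> T"
      then obtain c e' where qq: "q = (c, e')" "dist c0 c < \<delta>" "e' \<in> Onb" unfolding T_def by auto
      obtain a' z where a': "a' \<in> B \<inter> ball a0 \<delta>" "z \<in> N" "e' = coset \<kappa> z a'" using qq(3) unfolding Onb_def by blast
      have zX: "z \<in> topspace X" using openin_subset[OF rN(2)] a'(2) by blast
      have "dist (sm c a') (sm c0 a0) < r" using d(2)[of a' c] a'(1) qq(2) by (simp add: dist_commute)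
      then have "(sm c a', z) \<in> P" using rN(4) sm_closed a'(1,2) by blast
      then have "coset \<kappa> z (sm c a') \<in> U" unfolding P_def by simp
      then have "Esmul sm \<kappa> c e' \<in> U" using Esmul_coset[OF zX, of a' c] a' by simp
      moreover have "e' \<in> Etot X B \<kappa>" using a' zX coset_Etot by blast
      ultimately show "q \<in> S" unfolding S_def using qq(1) top by simp
    qed
    show "\<exists>T. openin (prod_topology euclidean (Etop X B \<kappa>)) T \<and> p \<in> T \<and> T \<subseteq> S"
      using T pT TS by blast
  qed
  then show "openin (prod_topology euclidean (Etop X B \<kappa>))
     {x \<in> topspace (prod_topology euclidean (Etop X B \<kappa>)). (\<lambda>(c, e). Esmul sm \<kappa> c e) x \<in> U}"
    unfolding S_def .
qed

lemma open_via_norm: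
  assumes "openin (prod_topology (subtopology euclidean B) X) {p \<in> B \<times> topspace X. Q (infdist (fst p) (\<kappa> (snd p)))}"
  shows "openin (Etop X B \<kappa>) {e \<in> topspace (Etop X B \<kappa>). Q (Enorm e)}"
proof -
  have eq: "{p \<in> B \<times> topspace X. coset \<kappa> (snd p) (fst p) \<in> {e \<in> Etot X B \<kappa>. Q (Enorm e)}}
      = {p \<in> B \<times> topspace X. Q (infdist (fst p) (\<kappa> (snd p)))}"
    using coset_Etot Enorm_coset by auto
  show ?thesis unfolding openin_Etop topspace_Etop Eopen_def eq using assms by blast
qed

lemma norm_cont:
  assumes lsc: "\<And>a t. a \<in> B \<Longrightarrow> openin X {y \<in> topspace X. t < infdist a (\<kappa> y)}"
  shows "continuous_map (Etop X B \<kappa>) euclideanreal Enorm"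
  unfolding continuous_map_upper_lower_semicontinuous_lt
proof (intro conjI allI)
  fix t :: real
  have "openin (prod_topology (subtopology euclidean B) X) {p \<in> B \<times> topspace X. t < infdist (fst p) (\<kappa> (snd p))}"
    unfolding openin_prod_topology_alt
  proof (intro allI impI)
    fix a0 y0 assume "(a0, y0) \<in> {p \<in> B \<times> topspace X. t < infdist (fst p) (\<kappa> (snd p))}"
    then have a0: "a0 \<in> B" "y0 \<in> topspace X" "t < infdist a0 (\<kappa> y0)" by auto
    define \<epsilon> where "\<epsilon> = (infdist a0 (\<kappa> y0) - t) / 2"
    have e: "\<epsilon> > 0" using a0(3) unfolding \<epsilon>_def by simp
    define N where "N = {y \<in> topspace X. t + \<epsilon> < infdist a0 (\<kappa> y)}"
    have N: "openin X N" unfolding N_def by (rule lsc[OF a0(1)])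
    have y0N: "y0 \<in> N" unfolding N_def \<epsilon>_def using a0 by (simp add: field_simps)
    define U where "U = B \<inter> ball a0 \<epsilon>"
    have U: "openin (subtopology euclidean B) U" unfolding U_def by (simp add: openin_open_Int)
    have "U \<times> N \<subseteq> {p \<in> B \<times> topspace X. t < infdist (fst p) (\<kappa> (snd p))}"
    proof
      fix p assume "p \<in> U \<times> N"
      then obtain a y where p: "p = (a, y)" "a \<in> U" "y \<in> N" by blast
      have "infdist a0 (\<kappa> y) \<le> infdist a (\<kappa> y) + dist a0 a" by (rule infdist_triangle)
      moreover have "dist a0 a < \<epsilon>" using p(2) unfolding U_def by simp
      moreover have "t + \<epsilon> < infdist a0 (\<kappa> y)" using p(3) unfolding N_def by simp
      ultimately have "t < infdist a (\<kappa> y)" by linarith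
      then show "p \<in> {p \<in> B \<times> topspace X. t < infdist (fst p) (\<kappa> (snd p))}"
        using p U_def N_def by auto
    qed
    moreover have "a0 \<in> U" unfolding U_def using a0 e by simp
    ultimately show "\<exists>U V. openin (subtopology euclidean B) U \<and> openin X V \<and> a0 \<in> U \<and> y0 \<in> V \<and>
        U \<times> V \<subseteq> {p \<in> B \<times> topspace X. t < infdist (fst p) (\<kappa> (snd p))}"
      using U N y0N by blast
  qed
  from open_via_norm[OF this] show "openin (Etop X B \<kappa>) {x \<in> topspace (Etop X B \<kappa>). t < Enorm x}" .
next
  fix t :: real
  have "openin (prod_topology (subtopology euclidean B) X) {p \<in> B \<times> topspace X. infdist (fst p) (\<kappa> (snd p)) < t}"
    unfolding openin_prod_topology_alt
  proof (intro allI impI)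
    fix a0 y0 assume "(a0, y0) \<in> {p \<in> B \<times> topspace X. infdist (fst p) (\<kappa> (snd p)) < t}"
    then have a0: "a0 \<in> B" "y0 \<in> topspace X" "infdist a0 (\<kappa> y0) < t" by auto
    define \<epsilon> where "\<epsilon> = (t - infdist a0 (\<kappa> y0)) / 2"
    have e: "\<epsilon> > 0" using a0(3) unfolding \<epsilon>_def by simp
    define N where "N = {y \<in> topspace X. infdist a0 (\<kappa> y) < t - \<epsilon>}"
    have N: "openin X N" unfolding N_def by (rule usc_norm)
    have y0N: "y0 \<in> N" unfolding N_def \<epsilon>_def using a0 by (simp add: field_simps)
    define U where "U = B \<inter> ball a0 \<epsilon>"
    have U: "openin (subtopology euclidean B) U" unfolding U_def by (simp add: openin_open_Int)
    have "U \<times> N \<subseteq> {p \<in> B \<times> topspace X. infdist (fst p) (\<kappa> (snd p)) < t}"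
    proof
      fix p assume "p \<in> U \<times> N"
      then obtain a y where p: "p = (a, y)" "a \<in> U" "y \<in> N" by blast
      have "infdist a (\<kappa> y) \<le> infdist a0 (\<kappa> y) + dist a a0" by (rule infdist_triangle)
      moreover have "dist a a0 < \<epsilon>" using p(2) unfolding U_def by (simp add: dist_commute)
      moreover have "infdist a0 (\<kappa> y) < t - \<epsilon>" using p(3) unfolding N_def by simp
      ultimately have "infdist a (\<kappa> y) < t" by linarith
      then show "p \<in> {p \<in> B \<times> topspace X. infdist (fst p) (\<kappa> (snd p)) < t}"
        using p U_def N_def by auto
    qed
    moreover have "a0 \<in> U" unfolding U_def using a0 e by simp
    ultimately show "\<exists>U V. openin (subtopology euclidean B) U \<and> openin X V \<and> a0 \<in> U \<and> y0 \<in> V \<and>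
        U \<times> V \<subseteq> {p \<in> B \<times> topspace X. infdist (fst p) (\<kappa> (snd p)) < t}"
      using U N y0N by blast
  qed
  from open_via_norm[OF this] show "openin (Etop X B \<kappa>) {x \<in> topspace (Etop X B \<kappa>). Enorm x < t}" .
qed

lemma rsub_sum:
  assumes V: "rsub V" and F: "finite F" and f: "\<And>k. k \<in> F \<Longrightarrow> f k \<in> V"
  shows "sum f F \<in> V"
  using F f
proof (induction F rule: finite_induct)
  case empty then show ?case using V unfolding rsub_def by simp
next
  case (insert k F) then show ?case using V unfolding rsub_def by simp
qed

lemma p_le_norm: "x \<in> topspace X \<Longrightarrow> infdist u (\<kappa> x) \<le> norm u"
  using infdist_le[OF k0, of x u] by (simp add: dist_norm)

lemma p_add:
  assumes x: "x \<in> topspace X"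
  shows "infdist (u + w) (\<kappa> x) \<le> infdist u (\<kappa> x) + infdist w (\<kappa> x)"
proof -
  have "infdist (u + w) (\<kappa> x) - infdist u (\<kappa> x) \<le> dist w v" if v: "v \<in> \<kappa> x" for v
  proof -
    have "infdist (u + w) (\<kappa> x) = infdist (u + (w - v) + v) (\<kappa> x)" by simp
    also have "\<dots> = infdist (u + (w - v)) (\<kappa> x)" by (rule infdist_shift[OF x v])
    also have "\<dots> \<le> infdist u (\<kappa> x) + dist (u + (w - v)) u" by (rule infdist_triangle)
    also have "dist (u + (w - v)) u = dist w v" by (simp add: dist_norm)
    finally show ?thesis by simp
  qed
  then have "infdist (u + w) (\<kappa> x) - infdist u (\<kappa> x) \<le> infdist w (\<kappa> x)"
    unfolding infdist_notempty[OF kne[OF x], of w] using kne[OF x] by (intro cINF_greatest) auto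
  then show ?thesis by simp
qed

lemma fibre_complete:
  assumes x: "x \<in> topspace X" and s: "\<forall>n. s n \<in> Etot X B \<kappa> \<and> fst (s n) = x"
   and cau: "\<forall>\<epsilon>>0. \<exists>N. \<forall>m\<ge>N. \<forall>n\<ge>N. Enorm (Esub sm \<kappa> (s m) (s n)) < \<epsilon>"
  shows "\<exists>e\<in>Etot X B \<kappa>. fst e = x \<and> (\<lambda>n. Enorm (Esub sm \<kappa> (s n) e)) \<longlonglongrightarrow> 0"
proof -
  define p where "p u = infdist u (\<kappa> x)" for u
  have "\<forall>n. \<exists>a. a \<in> B \<and> s n = coset \<kappa> x a"
  proof
    fix n
    obtain y a where a: "y \<in> topspace X" "a \<in> B" "s n = coset \<kappa> y a" using Etot_cases s by blast
    have "y = x" using a(3) s by (metis fst_coset)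
    then show "\<exists>a. a \<in> B \<and> s n = coset \<kappa> x a" using a by blast
  qed
  then obtain a where a: "\<And>n. a n \<in> B" "\<And>n. s n = coset \<kappa> x (a n)" by metis
  have Es: "Enorm (Esub sm \<kappa> (s m) (s n)) = p (a m - a n)" for m n
    using a Esub_coset[OF x] Enorm_coset[OF x] p_def by simp
  have "\<forall>k. \<exists>N. \<forall>m\<ge>N. \<forall>n\<ge>N. p (a m - a n) < (1/2) ^ k"
    using cau Es by (metis zero_less_divide_1_iff zero_less_numeral zero_less_power)
  then obtain N where N: "\<And>k m n. m \<ge> N k \<Longrightarrow> n \<ge> N k \<Longrightarrow> p (a m - a n) < (1/2) ^ k" by metis
  define nk where "nk k = (\<Sum>j\<le>k. N j)" for k
  have nkN: "N k \<le> nk k" for k unfolding nk_def by (rule member_le_sum) auto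
  have nkS: "nk k \<le> nk (Suc k)" for k unfolding nk_def by simp
  have "\<forall>k. \<exists>v. v \<in> \<kappa> x \<and> dist (a (nk (Suc k)) - a (nk k)) v < (1/2) ^ k"
  proof
    fix k
    have "p (a (nk (Suc k)) - a (nk k)) < (1/2) ^ k" using N nkN nkS le_trans by blast
    then have "infdist (a (nk (Suc k)) - a (nk k)) (\<kappa> x) < (1/2) ^ k" unfolding p_def .
    then show "\<exists>v. v \<in> \<kappa> x \<and> dist (a (nk (Suc k)) - a (nk k)) v < (1/2) ^ k"
      using infdist_lt[OF kne[OF x]] by blast
  qed
  then obtain v where v: "\<And>k. v k \<in> \<kappa> x" "\<And>k. dist (a (nk (Suc k)) - a (nk k)) (v k) < (1/2) ^ k" by metis
  define d where "d k = a (nk (Suc k)) - a (nk k) - v k" for k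
  have vB: "v k \<in> B" for k using kB[OF x] v(1) by blast
  have dB: "d k \<in> B" for k unfolding d_def using Sdiff a(1) vB by blast
  have dn: "norm (d k) \<le> (1/2) ^ k" for k using v(2)[of k] unfolding d_def dist_norm by simp
  have sd: "summable d"
    by (rule summable_comparison_test'[OF summable_geometric[of "1/2 :: real"]]) (use dn in auto)
  define D where "D = suminf d"
  have DL: "(\<lambda>K. \<Sum>k<K. d k) \<longlonglongrightarrow> D" unfolding D_def by (rule summable_LIMSEQ[OF sd])
  have DB: "D \<in> B"
  proof -
    have "\<forall>K. (\<Sum>k<K. d k) \<in> B" using rsub_sum[OF S_sub] dB by blast
    then show ?thesis using closed_sequential_limits[THEN iffD1, OF Bclosed, rule_format, of "\<lambda>K. \<Sum>k<K. d k" D] DL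
      by blast
  qed
  define b where "b = a (nk 0) + D"
  have bB: "b \<in> B" unfolding b_def using Sadd a(1) DB by blast
  have tel: "a (nk K) - b = ((\<Sum>k<K. d k) - D) + (\<Sum>k<K. v k)" for K
  proof -
    have "a (nk K) - a (nk 0) = (\<Sum>k<K. a (nk (Suc k)) - a (nk k))"
      by (rule sum_lessThan_telescope[symmetric])
    also have "\<dots> = (\<Sum>k<K. d k + v k)" unfolding d_def by simp
    also have "\<dots> = (\<Sum>k<K. d k) + (\<Sum>k<K. v k)" by (simp add: sum.distrib)
    finally show ?thesis unfolding b_def by (simp add: algebra_simps)
  qed
  have pK: "p (a (nk K) - b) \<le> norm ((\<Sum>k<K. d k) - D)" for K
  proof -
    have "(\<Sum>k<K. v k) \<in> \<kappa> x" using rsub_sum[OF krsub[OF x]] v(1) by blast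
    then have "p (a (nk K) - b) = p ((\<Sum>k<K. d k) - D)" unfolding tel p_def by (rule infdist_shift[OF x])
    also have "\<dots> \<le> norm ((\<Sum>k<K. d k) - D)" unfolding p_def by (rule p_le_norm[OF x])
    finally show ?thesis .
  qed
  define e where "e = coset \<kappa> x b"
  have eE: "e \<in> Etot X B \<kappa>" unfolding e_def using coset_Etot[OF x bB] .
  have Ese: "Enorm (Esub sm \<kappa> (s n) e) = p (a n - b)" for n
    unfolding e_def using a Esub_coset[OF x a(1) bB] Enorm_coset[OF x] p_def by simp
  have p0: "p u \<ge> 0" for u unfolding p_def by (rule infdist_nonneg)
  have "(\<lambda>n. p (a n - b)) \<longlonglongrightarrow> 0"
  proof (rule LIMSEQ_I)
    fix r :: real assume r: "r > 0"
    obtain K0 where K0: "\<And>K. K \<ge> K0 \<Longrightarrow> norm ((\<Sum>k<K. d k) - D) < r / 2"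
      using LIMSEQ_D[OF DL, of "r/2"] r by auto
    obtain K1 where K1: "(1/2 :: real) ^ K1 < r / 2" using real_arch_pow_inv[of "r/2" "1/2"] r by auto
    define K where "K = max K0 K1"
    have hK: "(1/2 :: real) ^ K \<le> (1/2) ^ K1" unfolding K_def by (rule power_decreasing) auto
    show "\<exists>no. \<forall>n\<ge>no. norm (p (a n - b) - 0) < r"
    proof (intro exI allI impI)
      fix n assume n: "n \<ge> N K"
      have "a n - b = (a n - a (nk K)) + (a (nk K) - b)" by simp
      then have "p (a n - b) \<le> p (a n - a (nk K)) + p (a (nk K) - b)"
        unfolding p_def by (metis p_add[OF x])
      also have "\<dots> < (1/2) ^ K + r / 2"
        using N[OF n nkN[of K]] pK[of K] K0[of K] unfolding K_def by simp
      also have "\<dots> < r" using hK K1 by linarith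
      finally show "norm (p (a n - b) - 0) < r" using p0 by simp
    qed
  qed
  then show ?thesis using eE Ese e_def by (intro bexI[of _ e]) auto
qed

theorem bundle_of_lsc:
  assumes kcl: "\<forall>x\<in>topspace X. closed (\<kappa> x)"
    and lsc: "\<And>a t. a \<in> B \<Longrightarrow> openin X {y \<in> topspace X. t < infdist a (\<kappa> y)}"
  shows "banach_bundle X B sm \<kappa>"
  unfolding banach_bundle_def
proof (intro conjI ballI allI impI)
  fix x assume x: "x \<in> topspace X"
  {
    fix e assume "e \<in> Etot X B \<kappa>" "fst e = x \<and> Enorm e = 0"
    then show "e = Ezero \<kappa> x" using fibre_zero[OF x] kcl x by blast
  }
  {
    fix s :: "nat \<Rightarrow> 'x \<times> 'b set"
    assume "(\<forall>n. s n \<in> Etot X B \<kappa> \<and> fst (s n) = x) \<and>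
           (\<forall>\<epsilon>>0. \<exists>N. \<forall>m\<ge>N. \<forall>n\<ge>N. Enorm (Esub sm \<kappa> (s m) (s n)) < \<epsilon>)"
    then show "\<exists>e\<in>Etot X B \<kappa>. fst e = x \<and> (\<lambda>n. Enorm (Esub sm \<kappa> (s n) e)) \<longlonglongrightarrow> 0"
      using fibre_complete[OF x] by blast
  }
next
  show "continuous_map
     (subtopology (prod_topology (Etop X B \<kappa>) (Etop X B \<kappa>))
       {(e, f). e \<in> Etot X B \<kappa> \<and> f \<in> Etot X B \<kappa> \<and> fst e = fst f})
     (Etop X B \<kappa>) (\<lambda>(e, f). Eadd e f)" by (rule add_cont)
next
  show "continuous_map (prod_topology euclidean (Etop X B \<kappa>)) (Etop X B \<kappa>) (\<lambda>(c, e). Esmul sm \<kappa> c e)"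
    by (rule smul_cont)
next
  show "continuous_map (Etop X B \<kappa>) euclideanreal Enorm" by (rule norm_cont[OF lsc])
next
  fix F x assume "x \<in> topspace X \<and> eventually (\<lambda>e. e \<in> Etot X B \<kappa>) F \<and> (Enorm \<longlongrightarrow> 0) F \<and> limitin X fst x F"
  then show "limitin (Etop X B \<kappa>) (\<lambda>e. e) (Ezero \<kappa> x) F" using nets_zero by blast
qed

end

context qfib
begin

lemma slice_open:
  assumes P: "openin (prod_topology (subtopology euclidean B) X) P" and a: "a \<in> B"
  shows "openin X {x \<in> topspace X. (a, x) \<in> P}"
proof -
  have "continuous_map X (prod_topology (subtopology euclidean B) X) (\<lambda>x. (a, x))"
    by (intro continuous_map_pairedI) (auto simp: a)
  from openin_continuous_map_preimage[OF this P] show ?thesis .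
qed

lemma bb_dist_cont:
  assumes bb: "banach_bundle X B sm \<kappa>" and a: "a \<in> B"
  shows "continuous_map X euclideanreal (\<lambda>x. infdist a (\<kappa> x))"
proof -
  have sig: "continuous_map X (Etop X B \<kappa>) (\<lambda>x. coset \<kappa> x a)"
    unfolding continuous_map_def
  proof (intro conjI allI impI Pi_I)
    fix x assume "x \<in> topspace X"
    then show "coset \<kappa> x a \<in> topspace (Etop X B \<kappa>)" using coset_Etot a topspace_Etop by simp
  next
    fix U assume "openin (Etop X B \<kappa>) U"
    then have P: "openin (prod_topology (subtopology euclidean B) X) {p \<in> B \<times> topspace X. coset \<kappa> (snd p) (fst p) \<in> U}"
      unfolding openin_Etop Eopen_def by blast
    have "{x \<in> topspace X. coset \<kappa> x a \<in> U} = {x \<in> topspace X. (a, x) \<in> {p \<in> B \<times> topspace X. coset \<kappa> (snd p) (fst p) \<in> U}}"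
      using a by auto
    then show "openin X {x \<in> topspace X. coset \<kappa> x a \<in> U}" using slice_open[OF P a] by simp
  qed
  have "continuous_map (Etop X B \<kappa>) euclideanreal Enorm" using bb unfolding banach_bundle_def by blast
  from continuous_map_compose[OF sig this] have "continuous_map X euclideanreal (Enorm \<circ> (\<lambda>x. coset \<kappa> x a))" .
  then show ?thesis by (rule continuous_map_eq) (simp add: Enorm_coset)
qed

lemma cont_generated:
  assumes f1: "\<And>x. x \<in> topspace X \<Longrightarrow> f x \<in> \<Union>S" and f2: "\<And>s. s \<in> S \<Longrightarrow> openin X {x \<in> topspace X. f x \<in> s}"
  shows "continuous_map X (topology_generated_by S) f"
  unfolding continuous_map_def
proof (intro conjI allI impI Pi_I)
  fix x assume "x \<in> topspace X" then show "f x \<in> topspace (topology_generated_by S)" using f1 by simp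
next
  fix U assume "openin (topology_generated_by S) U"
  then have "generate_topology_on S U" by (simp add: openin_topology_generated_by_iff)
  then show "openin X {x \<in> topspace X. f x \<in> U}"
  proof (induction rule: generate_topology_on.induct)
    case Empty then show ?case by simp
  next
    case (Int a b)
    have "{x \<in> topspace X. f x \<in> a \<inter> b} = {x \<in> topspace X. f x \<in> a} \<inter> {x \<in> topspace X. f x \<in> b}" by blast
    then show ?case using Int by (simp add: openin_Int)
  next
    case (UN K)
    have "{x \<in> topspace X. f x \<in> \<Union>K} = (\<Union>k\<in>K. {x \<in> topspace X. f x \<in> k})" by blast
    then show ?case using UN by (auto intro!: openin_Union)
  next
    case (Basis s) then show ?case using f2 by blast
  qed
qed

lemma qvb_of_usc:
  assumes usc: "\<And>a t. a \<in> B \<Longrightarrow> openin X {y \<in> topspace X. infdist a (\<kappa> y) < t}"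
  shows "quotient_vector_bundle X B sm \<kappa>"
  unfolding quotient_vector_bundle_def lower_vietoris_def
proof (intro conjI ballI cont_generated)
  fix x assume x: "x \<in> topspace X"
  show "csubspace_in B sm (\<kappa> x)" by (rule ksub[OF x])
  have "\<kappa> x \<in> {V. csubspace_in B sm V \<and> V \<inter> B \<noteq> {}}" using ksub[OF x] k0[OF x] kB[OF x] by auto
  moreover have "openin (subtopology euclidean B) B" by (metis openin_topspace topspace_euclidean_subtopology)
  ultimately show "\<kappa> x \<in> \<Union>{{V. csubspace_in B sm V \<and> V \<inter> U \<noteq> {}} |U. openin (subtopology euclidean B) U}"
    by blast
next
  fix s assume "s \<in> {{V. csubspace_in B sm V \<and> V \<inter> U \<noteq> {}} |U. openin (subtopology euclidean B) U}"
  then obtain U where U: "openin (subtopology euclidean B) U" "s = {V. csubspace_in B sm V \<and> V \<inter> U \<noteq> {}}" by blast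
  show "openin X {x \<in> topspace X. \<kappa> x \<in> s}"
  proof (subst openin_subopen, intro ballI)
    fix x0 assume "x0 \<in> {x \<in> topspace X. \<kappa> x \<in> s}"
    then have x0: "x0 \<in> topspace X" and "\<kappa> x0 \<inter> U \<noteq> {}" using U by auto
    then obtain v where v: "v \<in> \<kappa> x0" "v \<in> U" by blast
    have h2: "\<forall>a\<in>U. \<exists>e>0. \<forall>b\<in>B. dist b a < e \<longrightarrow> b \<in> U"
      using U(1) unfolding openin_euclidean_subtopology_iff by (elim conjE)
    obtain r where r: "r > 0" "\<forall>b\<in>B. dist b v < r \<longrightarrow> b \<in> U"
      using bspec[OF h2 v(2)] by (elim exE conjE)
    have vB: "v \<in> B" using kB[OF x0] v(1) by blast
    define T where "T = {y \<in> topspace X. infdist v (\<kappa> y) < r}"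
    have T: "openin X T" unfolding T_def by (rule usc[OF vB])
    have "x0 \<in> T" unfolding T_def using x0 v(1) r(1) by simp
    moreover have "T \<subseteq> {x \<in> topspace X. \<kappa> x \<in> s}"
    proof
      fix y assume "y \<in> T"
      then have y: "y \<in> topspace X" "infdist v (\<kappa> y) < r" unfolding T_def by auto
      then obtain w where w: "w \<in> \<kappa> y" "dist v w < r" using infdist_lt[OF kne[OF y(1)]] by blast
      have "w \<in> B" using kB[OF y(1)] w(1) by blast
      then have "w \<in> U" using r(2) w(2) by (simp add: dist_commute)
      then show "y \<in> {x \<in> topspace X. \<kappa> x \<in> s}" using y(1) w(1) ksub[OF y(1)] U(2) by blast
    qed
    ultimately show "\<exists>T. openin X T \<and> x0 \<in> T \<and> T \<subseteq> {x \<in> topspace X. \<kappa> x \<in> s}" using T by blast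
  qed
qed

end

lemma cont_eval: "continuous_on UNIV (\<lambda>f::'a::real_normed_vector \<Rightarrow>\<^sub>L complex. blinfun_apply f x)"
  by (intro linear_continuous_on blinfun.bounded_linear_left)

lemma closed_cdual: "closed (cdual :: ('a::complex_normed_vector \<Rightarrow>\<^sub>L complex) set)"
proof -
  have "cdual = {f::'a \<Rightarrow>\<^sub>L complex. \<forall>c. \<forall>x. blinfun_apply f (c *\<^sub>C x) = c * blinfun_apply f x}"
    unfolding cdual_def by simp
  also have "closed \<dots>"
    by (intro closed_Collect_all closed_Collect_eq cont_eval continuous_on_mult_left)
  finally show ?thesis .
qed

lemma annih_sub: "annih V \<subseteq> cdual" unfolding annih_def by blast

lemma closed_annih: "closed (annih (V :: 'a::complex_normed_vector set))"
proof -
  have "annih V = cdual \<inter> {f. \<forall>v\<in>V. blinfun_apply f v = 0}" unfolding annih_def by blast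
  moreover have "{f::'a \<Rightarrow>\<^sub>L complex. \<forall>v\<in>V. blinfun_apply f v = 0} = (\<Inter>v\<in>V. {f. blinfun_apply f v = 0})" by auto
  moreover have "closed (\<Inter>v\<in>V. {f::'a \<Rightarrow>\<^sub>L complex. blinfun_apply f v = 0})"
    by (intro closed_INT ballI closed_Collect_eq cont_eval continuous_on_const)
  ultimately show ?thesis using closed_cdual closed_Int by (metis (no_types, lifting))
qed

lemma csub_annih: "csubspace_in cdual dual_smul (annih (V :: 'a::complex_normed_vector set))"
  unfolding csubspace_in_def
proof (intro conjI ballI allI)
  show "annih V \<subseteq> cdual" by (rule annih_sub)
  show "0 \<in> annih V" unfolding annih_def cdual_def by simp
  fix u v assume "u \<in> annih V" "v \<in> annih V"
  then show "u + v \<in> annih V" unfolding annih_def cdual_def by (simp add: blinfun.bilinear_simps distrib_left)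
next
  fix c v assume "v \<in> annih V"
  then show "dual_smul c v \<in> annih V" unfolding annih_def cdual_def by simp
qed

lemma annih_diff: "f \<in> annih V \<Longrightarrow> g \<in> annih V \<Longrightarrow> f - g \<in> annih V"
  unfolding annih_def cdual_def by (simp add: blinfun.bilinear_simps right_diff_distrib)

lemma qfib_A:
  assumes "quotient_vector_bundle X UNIV scaleC \<kappa>"
  shows "qfib (UNIV :: 'a::{complex_normed_vector, banach} set) scaleC X \<kappa>"
  by (rule qfib.intro[OF cvs_A]) (use assms in \<open>simp add: qfib_axioms_def quotient_vector_bundle_def\<close>)

lemma qbun_A:
  assumes "quotient_vector_bundle X UNIV scaleC \<kappa>"
  shows "qbun (UNIV :: 'a::{complex_normed_vector, banach} set) scaleC X \<kappa>"
  by (rule qbun.intro[OF qfib_A[OF assms]]) (use assms in \<open>simp add: qbun_axioms_def\<close>)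

lemma qfib_D:
  "qfib (cdual :: ('a::{complex_normed_vector, banach} \<Rightarrow>\<^sub>L complex) set) dual_smul X (\<lambda>x. annih (\<kappa> x))"
  by (rule qfib.intro[OF cvs_D]) (simp add: qfib_axioms_def csub_annih)

lemma qbun_D:
  assumes "quotient_vector_bundle X (cdual :: ('a::{complex_normed_vector, banach} \<Rightarrow>\<^sub>L complex) set) dual_smul (\<lambda>x. annih (\<kappa> x))"
  shows "qbun (cdual :: ('a \<Rightarrow>\<^sub>L complex) set) dual_smul X (\<lambda>x. annih (\<kappa> x))"
  by (rule qbun.intro[OF qfib_D]) (use assms closed_cdual in \<open>simp add: qbun_axioms_def\<close>)

lemma annih_bound:
  fixes V :: "'a::complex_normed_vector set"
  assumes psi: "\<psi> \<in> annih V" and V: "V \<noteq> {}"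
  shows "cmod (blinfun_apply \<psi> a) \<le> norm \<psi> * infdist a V"
proof (cases "norm \<psi> = 0")
  case True then show ?thesis by simp
next
  case False
  then have np: "norm \<psi> > 0" by simp
  have "cmod (blinfun_apply \<psi> a) / norm \<psi> \<le> dist a v" if v: "v \<in> V" for v
  proof -
    have "blinfun_apply \<psi> a = blinfun_apply \<psi> (a - v)" using psi v unfolding annih_def by (simp add: blinfun.diff_right)
    also have "cmod \<dots> \<le> norm \<psi> * norm (a - v)" by (rule norm_blinfun)
    finally show ?thesis using np by (simp add: dist_norm field_simps)
  qed
  then have "cmod (blinfun_apply \<psi> a) / norm \<psi> \<le> infdist a V"
    unfolding infdist_notempty[OF V] using V by (intro cINF_greatest) auto
  then show ?thesis using np by (simp add: field_simps)
qed

lemma lsc_A: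
  fixes \<kappa> :: "'x \<Rightarrow> 'a::{complex_normed_vector, banach} set"
  assumes qA: "quotient_vector_bundle X UNIV scaleC \<kappa>"
    and qD: "quotient_vector_bundle X (cdual :: ('a \<Rightarrow>\<^sub>L complex) set) dual_smul (\<lambda>x. annih (\<kappa> x))"
  shows "openin X {y \<in> topspace X. t < infdist a (\<kappa> y)}"
proof (subst openin_subopen, intro ballI)
  interpret A: qbun UNIV scaleC X \<kappa> by (rule qbun_A[OF qA])
  interpret D: qbun cdual dual_smul X "\<lambda>x. annih (\<kappa> x)" by (rule qbun_D[OF qD])
  fix x0 assume "x0 \<in> {y \<in> topspace X. t < infdist a (\<kappa> y)}"
  then have x0: "x0 \<in> topspace X" and d: "t < infdist a (\<kappa> x0)" by auto
  show "\<exists>T. openin X T \<and> x0 \<in> T \<and> T \<subseteq> {y \<in> topspace X. t < infdist a (\<kappa> y)}"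
  proof (cases "t < 0")
    case True
    then have "topspace X \<subseteq> {y \<in> topspace X. t < infdist a (\<kappa> y)}"
      using infdist_nonneg[of a] by (auto intro: less_le_trans)
    then show ?thesis using x0 by blast
  next
    case False
    then have t0: "t \<ge> 0" by simp
    define d where "d = infdist a (\<kappa> x0)"
    have dpos: "d > 0" using d t0 d_def by simp
    obtain \<phi> where phi: "\<phi> \<in> cdual" "\<forall>v\<in>\<kappa> x0. blinfun_apply \<phi> v = 0" "norm \<phi> \<le> 1"
      "blinfun_apply \<phi> a = of_real d" using hb_annih[OF A.ksub[OF x0], of a] d_def by blast
    have phiF: "\<phi> \<in> annih (\<kappa> x0)" unfolding annih_def using phi by blast
    define r where "r = (d - t) / (2 * (norm a + t + 1))"
    have den: "norm a + t + 1 > 0" using t0 norm_ge_zero[of a] by linarith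
    have r: "r > 0" unfolding r_def using d d_def den by simp
    have rkey: "r * (norm a + t) < d - t"
    proof -
      have "r * (norm a + t) \<le> r * (norm a + t + 1)" using r by simp
      also have "\<dots> = (d - t) / 2"
      proof -
        define K where "K = norm a + t + 1"
        have "K > 0" using den K_def by simp
        then have "(d - t) / (2 * K) * K = (d - t) / 2" by (simp add: field_simps)
        then show ?thesis unfolding r_def K_def .
      qed
      also have "\<dots> < d - t" using d d_def by simp
      finally show ?thesis .
    qed
    obtain N where N: "openin X N" "x0 \<in> N" "\<forall>y\<in>N. \<exists>w\<in>annih (\<kappa> y). dist \<phi> w < r"
      using D.lsc_k[OF x0 phiF r] by blast
    have "N \<subseteq> {y \<in> topspace X. t < infdist a (\<kappa> y)}"
    proof
      fix y assume yN: "y \<in> N"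
      then have y: "y \<in> topspace X" using openin_subset[OF N(1)] by blast
      obtain \<psi> where psi: "\<psi> \<in> annih (\<kappa> y)" "dist \<phi> \<psi> < r" using N(3) yN by blast
      have "cmod (blinfun_apply (\<phi> - \<psi>) a) \<le> norm (\<phi> - \<psi>) * norm a" by (rule norm_blinfun)
      also have "\<dots> \<le> r * norm a" using psi(2) by (intro mult_right_mono) (auto simp: dist_norm)
      finally have h1: "cmod (blinfun_apply \<phi> a - blinfun_apply \<psi> a) \<le> r * norm a"
        by (simp add: blinfun.diff_left)
      have "cmod (blinfun_apply \<phi> a) = d" using phi(4) dpos by simp
      then have h2: "d - r * norm a \<le> cmod (blinfun_apply \<psi> a)"
        using h1 norm_triangle_ineq2[of "blinfun_apply \<phi> a" "blinfun_apply \<psi> a"] by linarith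
      have npsi: "norm \<psi> \<le> 1 + r"
        using norm_triangle_ineq2[of \<psi> \<phi>] psi(2) phi(3) by (simp add: dist_norm norm_minus_commute)
      have h3: "cmod (blinfun_apply \<psi> a) \<le> norm \<psi> * infdist a (\<kappa> y)"
        by (rule annih_bound[OF psi(1) A.kne[OF y]])
      have h4: "norm \<psi> * infdist a (\<kappa> y) \<le> (1 + r) * infdist a (\<kappa> y)"
        using npsi infdist_nonneg by (intro mult_right_mono) auto
      have "(1 + r) * t < (1 + r) * infdist a (\<kappa> y)"
        using h2 h3 h4 rkey by (simp add: algebra_simps)
      then have "t < infdist a (\<kappa> y)" using r by (simp add: mult_less_cancel_left_pos)
      then show "y \<in> {y \<in> topspace X. t < infdist a (\<kappa> y)}" using y by simp
    qed
    then show ?thesis using N by blast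
  qed
qed

lemma lsc_D:
  fixes \<kappa> :: "'x \<Rightarrow> 'a::{complex_normed_vector, banach} set"
  assumes qA: "quotient_vector_bundle X UNIV scaleC \<kappa>" and phi: "\<phi> \<in> cdual"
  shows "openin X {y \<in> topspace X. t < infdist \<phi> (annih (\<kappa> y))}"
proof (subst openin_subopen, intro ballI)
  interpret A: qbun UNIV scaleC X \<kappa> by (rule qbun_A[OF qA])
  interpret D: qfib cdual dual_smul X "\<lambda>x. annih (\<kappa> x)" by (rule qfib_D)
  fix x0 assume "x0 \<in> {y \<in> topspace X. t < infdist \<phi> (annih (\<kappa> y))}"
  then have x0: "x0 \<in> topspace X" and d: "t < infdist \<phi> (annih (\<kappa> x0))" by auto
  show "\<exists>T. openin X T \<and> x0 \<in> T \<and> T \<subseteq> {y \<in> topspace X. t < infdist \<phi> (annih (\<kappa> y))}"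
  proof (cases "t < 0")
    case True
    then have "topspace X \<subseteq> {y \<in> topspace X. t < infdist \<phi> (annih (\<kappa> y))}"
      using infdist_nonneg[of \<phi>] by (auto intro: less_le_trans)
    then show ?thesis using x0 by blast
  next
    case False
    then have t0: "t \<ge> 0" by simp
    define d where "d = infdist \<phi> (annih (\<kappa> x0))"
    define t1 where "t1 = (2 * t + d) / 3"
    define M0 where "M0 = (t + 2 * d) / 3"
    have tt: "t < t1" "t1 < M0" "M0 < d" "0 \<le> M0" "0 \<le> t1" using d t0 unfolding t1_def M0_def d_def by auto
    have "\<exists>v\<in>\<kappa> x0. cmod (blinfun_apply \<phi> v) > M0 * norm v"
    proof (rule ccontr)
      assume "\<not> ?thesis"
      then have bd: "\<And>v. v \<in> \<kappa> x0 \<Longrightarrow> cmod (blinfun_apply \<phi> v) \<le> M0 * norm v" by (simp add: not_less)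
      obtain g where g: "g \<in> cdual" "\<forall>v\<in>\<kappa> x0. blinfun_apply g v = blinfun_apply \<phi> v" "norm g \<le> M0"
        using hb_extend[OF A.ksub[OF x0] phi tt(4) bd] by blast
      have "\<phi> - g \<in> annih (\<kappa> x0)"
        using g phi unfolding annih_def cdual_def by (simp add: blinfun.bilinear_simps right_diff_distrib)
      then have "d \<le> dist \<phi> (\<phi> - g)" unfolding d_def by (rule infdist_le)
      also have "\<dots> = norm g" by (simp add: dist_norm)
      finally show False using g(3) tt(3) by simp
    qed
    then obtain v where v: "v \<in> \<kappa> x0" "cmod (blinfun_apply \<phi> v) > M0 * norm v" by blast
    define c where "c = cmod (blinfun_apply \<phi> v) - t1 * norm v"
    have c: "c > 0"
    proof -
      have "t1 * norm v \<le> M0 * norm v" using tt(2) by (intro mult_right_mono) auto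
      then show ?thesis unfolding c_def using v(2) by linarith
    qed
    define r where "r = c / (2 * (norm \<phi> + t1 + 1))"
    have den: "norm \<phi> + t1 + 1 > 0" using tt(5) norm_ge_zero[of \<phi>] by linarith
    have r: "r > 0" unfolding r_def using c den by simp
    have rkey: "r * (norm \<phi> + t1) < c"
    proof -
      have "r * (norm \<phi> + t1) \<le> r * (norm \<phi> + t1 + 1)" using r by simp
      also have "\<dots> = c / 2"
      proof -
        define K where "K = norm \<phi> + t1 + 1"
        have "K > 0" using den K_def by simp
        then have "c / (2 * K) * K = c / 2" by (simp add: field_simps)
        then show ?thesis unfolding r_def K_def .
      qed
      also have "\<dots> < c" using c by simp
      finally show ?thesis .
    qed
    obtain N where N: "openin X N" "x0 \<in> N" "\<forall>y\<in>N. \<exists>w\<in>\<kappa> y. dist v w < r"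
      using A.lsc_k[OF x0 v(1) r] by blast
    have "N \<subseteq> {y \<in> topspace X. t < infdist \<phi> (annih (\<kappa> y))}"
    proof
      fix y assume yN: "y \<in> N"
      then have y: "y \<in> topspace X" using openin_subset[OF N(1)] by blast
      obtain w where w: "w \<in> \<kappa> y" "dist v w < r" using N(3) yN by blast
      have bnd: "t1 \<le> dist \<phi> g" if g: "g \<in> annih (\<kappa> y)" for g
      proof -
        have gw: "blinfun_apply g w = 0" using g w(1) unfolding annih_def by blast
        have "cmod (blinfun_apply \<phi> (v - w)) \<le> norm \<phi> * norm (v - w)" by (rule norm_blinfun)
        also have "\<dots> \<le> norm \<phi> * r" using w(2) by (intro mult_left_mono) (auto simp: dist_norm)
        finally have "cmod (blinfun_apply \<phi> v - blinfun_apply \<phi> w) \<le> norm \<phi> * r" by (simp add: blinfun.diff_right)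
        then have e1: "cmod (blinfun_apply \<phi> v) - norm \<phi> * r \<le> cmod (blinfun_apply \<phi> w)"
          using norm_triangle_ineq2[of "blinfun_apply \<phi> v" "blinfun_apply \<phi> w"] by linarith
        have "cmod (blinfun_apply \<phi> w) = cmod (blinfun_apply (\<phi> - g) w)" using gw by (simp add: blinfun.diff_left)
        also have "\<dots> \<le> norm (\<phi> - g) * norm w" by (rule norm_blinfun)
        finally have e2: "cmod (blinfun_apply \<phi> w) \<le> dist \<phi> g * norm w" by (simp add: dist_norm)
        have "norm w \<le> norm v + r" using norm_triangle_ineq2[of w v] w(2) by (simp add: dist_norm norm_minus_commute)
        then have e3: "t1 * norm w \<le> t1 * (norm v + r)" using tt(5) by (intro mult_left_mono) auto
        have "t1 * norm w < dist \<phi> g * norm w"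
          using e1 e2 e3 rkey unfolding c_def by (simp add: algebra_simps)
        then show ?thesis
          by (metis mult_less_cancel_right less_le norm_ge_zero not_less)
      qed
      have "t1 \<le> infdist \<phi> (annih (\<kappa> y))"
        unfolding infdist_notempty[OF D.kne[OF y]] using D.kne[OF y] bnd by (intro cINF_greatest) auto
      then show "y \<in> {y \<in> topspace X. t < infdist \<phi> (annih (\<kappa> y))}" using y tt(1) by simp
    qed
    then show ?thesis using N by blast
  qed
qed

lemma part1:
  fixes \<kappa> :: "'x \<Rightarrow> 'a::{complex_normed_vector, banach} set"
  assumes qA: "quotient_vector_bundle X UNIV scaleC \<kappa>" and kcl: "\<forall>x\<in>topspace X. closed (\<kappa> x)"
    and qD: "quotient_vector_bundle X (cdual :: ('a \<Rightarrow>\<^sub>L complex) set) dual_smul (\<lambda>x. annih (\<kappa> x))"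
  shows "banach_bundle X UNIV scaleC \<kappa> \<and> banach_bundle X (cdual :: ('a \<Rightarrow>\<^sub>L complex) set) dual_smul (\<lambda>x. annih (\<kappa> x))"
proof
  show "banach_bundle X UNIV scaleC \<kappa>"
    by (rule qbun.bundle_of_lsc[OF qbun_A[OF qA] kcl]) (rule lsc_A[OF qA qD])
  show "banach_bundle X (cdual :: ('a \<Rightarrow>\<^sub>L complex) set) dual_smul (\<lambda>x. annih (\<kappa> x))"
    by (rule qbun.bundle_of_lsc[OF qbun_D[OF qD]]) (use closed_annih lsc_D[OF qA] in auto)
qed

lemma qvbD_of_bbD:
  fixes \<kappa> :: "'x \<Rightarrow> 'a::{complex_normed_vector, banach} set"
  assumes bb: "banach_bundle X (cdual :: ('a \<Rightarrow>\<^sub>L complex) set) dual_smul (\<lambda>x. annih (\<kappa> x))"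
  shows "quotient_vector_bundle X (cdual :: ('a \<Rightarrow>\<^sub>L complex) set) dual_smul (\<lambda>x. annih (\<kappa> x))"
proof (rule qfib.qvb_of_usc[OF qfib_D])
  fix a :: "'a \<Rightarrow>\<^sub>L complex" and t :: real assume a: "a \<in> cdual"
  have "continuous_map X euclideanreal (\<lambda>x. infdist a (annih (\<kappa> x)))"
    by (rule qfib.bb_dist_cont[OF qfib_D bb a])
  then show "openin X {y \<in> topspace X. infdist a (annih (\<kappa> y)) < t}"
    unfolding continuous_map_upper_lower_semicontinuous_lt by blast
qed

lemma fc_seq_open:
  assumes fc: "first_countable X" and W: "W \<subseteq> topspace X"
    and seq: "\<And>x0 y. x0 \<in> W \<Longrightarrow> (\<forall>n. y n \<in> topspace X) \<Longrightarrow> limitin X y x0 sequentially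
               \<Longrightarrow> eventually (\<lambda>n. y n \<in> W) sequentially"
  shows "openin X W"
proof (subst openin_subopen, intro ballI, rule ccontr)
  fix x0 assume x0W: "x0 \<in> W" and no: "\<not> (\<exists>T. openin X T \<and> x0 \<in> T \<and> T \<subseteq> W)"
  have x0: "x0 \<in> topspace X" using x0W W by blast
  obtain \<B> where B: "countable \<B>" "\<And>V. V \<in> \<B> \<Longrightarrow> openin X V"
    "\<And>U. openin X U \<Longrightarrow> x0 \<in> U \<Longrightarrow> \<exists>V\<in>\<B>. x0 \<in> V \<and> V \<subseteq> U"
    using fc x0 unfolding first_countable_def by metis
  define B0 where "B0 = {V \<in> \<B>. x0 \<in> V}"
  have B0c: "countable B0" unfolding B0_def using B(1) by simp
  have B0ne: "B0 \<noteq> {}" using B(3)[OF openin_topspace x0] unfolding B0_def by blast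
  define b where "b = from_nat_into B0"
  have bB0: "b n \<in> B0" for n unfolding b_def by (rule from_nat_into[OF B0ne])
  have bsurj: "\<exists>n. b n = V" if "V \<in> B0" for V unfolding b_def by (rule from_nat_into_surj[OF B0c that])
  define Nn where "Nn n = \<Inter> (b ` {..n})" for n
  have Nopen: "openin X (Nn n)" for n unfolding Nn_def
    by (rule openin_Inter) (use bB0 B(2) B0_def in auto)
  have x0N: "x0 \<in> Nn n" for n unfolding Nn_def using bB0 B0_def by auto
  have "\<forall>n. \<exists>z. z \<in> Nn n \<and> z \<notin> W" using no Nopen x0N by blast
  then obtain y where y: "\<And>n. y n \<in> Nn n" "\<And>n. y n \<notin> W" by metis
  have yX: "\<forall>n. y n \<in> topspace X" using y(1) Nopen openin_subset by blast
  have "limitin X y x0 sequentially"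
    unfolding limitin_def
  proof (intro conjI allI impI x0)
    fix U assume U: "openin X U \<and> x0 \<in> U"
    then obtain V where V: "V \<in> \<B>" "x0 \<in> V" "V \<subseteq> U" using B(3) by blast
    then obtain k where k: "b k = V" using bsurj B0_def by blast
    show "eventually (\<lambda>n. y n \<in> U) sequentially"
      unfolding eventually_sequentially
    proof (intro exI allI impI)
      fix n assume "k \<le> n"
      then have "Nn n \<subseteq> b k" unfolding Nn_def by auto
      then show "y n \<in> U" using y(1) k V(3) by blast
    qed
  qed
  from seq[OF x0W yX this] obtain M where "\<And>n. n \<ge> M \<Longrightarrow> y n \<in> W" unfolding eventually_sequentially by blast
  then show False using y(2) by blast
qed

lemma div_helper: "(\<tau>::real) > 0 \<Longrightarrow> \<tau> * x < \<eta> + \<tau> * \<epsilon> \<Longrightarrow> x < \<eta> / \<tau> + \<epsilon>"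
proof -
  assume t: "\<tau> > 0" and h: "\<tau> * x < \<eta> + \<tau> * \<epsilon>"
  have "\<eta> / \<tau> + \<epsilon> = (\<eta> + \<tau> * \<epsilon>) / \<tau>" using t by (simp add: field_simps)
  moreover have "x < (\<eta> + \<tau> * \<epsilon>) / \<tau>" using t h by (simp add: pos_less_divide_eq mult.commute)
  ultimately show ?thesis by simp
qed

lemma smulian0:
  fixes a :: "'a::complex_normed_vector"
  assumes sm: "frechet_smooth TYPE('a)" and na: "norm a = 1"
  shows "\<exists>L. \<forall>\<epsilon>>0. \<exists>\<tau>>0. \<forall>(f :: 'a \<Rightarrow>\<^sub>L complex) b. norm f \<le> 1 \<longrightarrow> norm b = 1 \<longrightarrow>
            \<bar>Re (blinfun_apply f b) + L b\<bar> < (1 - Re (blinfun_apply f a)) / \<tau> + \<epsilon>"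
proof -
  obtain L where L: "\<And>\<epsilon>. \<epsilon> > 0 \<Longrightarrow> \<exists>\<delta>0>0. \<forall>b::'a. norm b = 1 \<longrightarrow>
           (\<forall>\<delta>::real. \<delta> \<noteq> 0 \<and> \<bar>\<delta>\<bar> < \<delta>0 \<longrightarrow> \<bar>(norm (a - \<delta> *\<^sub>R b) - norm a) / \<delta> - L b\<bar> < \<epsilon>)"
    using sm na unfolding frechet_smooth_def by blast
  show ?thesis
  proof (intro exI[of _ L] allI impI)
    fix \<epsilon> :: real assume e: "\<epsilon> > 0"
    obtain \<delta>0 where d0: "\<delta>0 > 0" "\<And>b \<delta>. norm b = 1 \<Longrightarrow> \<delta> \<noteq> 0 \<Longrightarrow> \<bar>\<delta>\<bar> < \<delta>0 \<Longrightarrow>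
        \<bar>(norm (a - \<delta> *\<^sub>R b) - norm a) / \<delta> - L b\<bar> < \<epsilon>" using L[OF e] by blast
    define \<tau> where "\<tau> = \<delta>0 / 2"
    have t: "\<tau> > 0" "\<bar>\<tau>\<bar> < \<delta>0" "\<bar>-\<tau>\<bar> < \<delta>0" "\<tau> \<noteq> 0" "-\<tau> \<noteq> 0" using d0(1) unfolding \<tau>_def by auto
    show "\<exists>\<tau>>0. \<forall>(f :: 'a \<Rightarrow>\<^sub>L complex) b. norm f \<le> 1 \<longrightarrow> norm b = 1 \<longrightarrow>
            \<bar>Re (blinfun_apply f b) + L b\<bar> < (1 - Re (blinfun_apply f a)) / \<tau> + \<epsilon>"
    proof (intro exI[of _ \<tau>] conjI allI impI t(1))
      fix f :: "'a \<Rightarrow>\<^sub>L complex" and b :: 'a assume nf: "norm f \<le> 1" and nb: "norm b = 1"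
      have h1: "\<bar>(norm (a - \<tau> *\<^sub>R b) - 1) / \<tau> - L b\<bar> < \<epsilon>" using d0(2)[OF nb t(4) t(2)] na by simp
      have h2: "\<bar>(norm (a - (-\<tau>) *\<^sub>R b) - 1) / (-\<tau>) - L b\<bar> < \<epsilon>" using d0(2)[OF nb t(5) t(3)] na by simp
      have n1: "norm (a - \<tau> *\<^sub>R b) < 1 + \<tau> * (L b + \<epsilon>)"
      proof -
        have "(norm (a - \<tau> *\<^sub>R b) - 1) / \<tau> < L b + \<epsilon>" using h1 by linarith
        then have "norm (a - \<tau> *\<^sub>R b) - 1 < (L b + \<epsilon>) * \<tau>" using t(1) by (simp add: pos_divide_less_eq)
        then show ?thesis by (simp add: algebra_simps)
      qed
      have n2: "norm (a + \<tau> *\<^sub>R b) < 1 - \<tau> * (L b - \<epsilon>)"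
      proof -
        have "L b - \<epsilon> < (norm (a + \<tau> *\<^sub>R b) - 1) / (-\<tau>)" using h2 by simp
        then have "L b - \<epsilon> < - ((norm (a + \<tau> *\<^sub>R b) - 1) / \<tau>)" by simp
        then have "(norm (a + \<tau> *\<^sub>R b) - 1) / \<tau> < \<epsilon> - L b" by linarith
        then have "norm (a + \<tau> *\<^sub>R b) - 1 < (\<epsilon> - L b) * \<tau>" using t(1) by (simp add: pos_divide_less_eq)
        then show ?thesis by (simp add: algebra_simps)
      qed
      have bound: "Re (blinfun_apply f z) \<le> norm z" for z
      proof -
        have "Re (blinfun_apply f z) \<le> cmod (blinfun_apply f z)" by (rule complex_Re_le_cmod)
        also have "\<dots> \<le> norm f * norm z" by (rule norm_blinfun)
        also have "\<dots> \<le> 1 * norm z" using nf by (intro mult_right_mono) auto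
        finally show ?thesis by simp
      qed
      have r1: "Re (blinfun_apply f (a - \<tau> *\<^sub>R b)) = Re (blinfun_apply f a) - \<tau> * Re (blinfun_apply f b)"
        by (simp add: blinfun.diff_right blinfun.scaleR_right)
      have r2: "Re (blinfun_apply f (a + \<tau> *\<^sub>R b)) = Re (blinfun_apply f a) + \<tau> * Re (blinfun_apply f b)"
        by (simp add: blinfun.add_right blinfun.scaleR_right)
      define \<eta> where "\<eta> = 1 - Re (blinfun_apply f a)"
      have A1: "\<tau> * (- (Re (blinfun_apply f b) + L b)) < \<eta> + \<tau> * \<epsilon>"
        using bound[of "a - \<tau> *\<^sub>R b"] n1 r1 unfolding \<eta>_def by (simp add: algebra_simps)
      have A2: "\<tau> * (Re (blinfun_apply f b) + L b) < \<eta> + \<tau> * \<epsilon>"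
        using bound[of "a + \<tau> *\<^sub>R b"] n2 r2 unfolding \<eta>_def by (simp add: algebra_simps)
      have "- (Re (blinfun_apply f b) + L b) < \<eta> / \<tau> + \<epsilon>" by (rule div_helper[OF t(1) A1])
      moreover have "Re (blinfun_apply f b) + L b < \<eta> / \<tau> + \<epsilon>" by (rule div_helper[OF t(1) A2])
      ultimately show "\<bar>Re (blinfun_apply f b) + L b\<bar> < (1 - Re (blinfun_apply f a)) / \<tau> + \<epsilon>"
        unfolding \<eta>_def by linarith
    qed
  qed
qed

lemma smulian:
  fixes a :: "'a::complex_normed_vector" and \<psi> :: "'a \<Rightarrow>\<^sub>L complex"
  assumes sm: "frechet_smooth TYPE('a)" and na: "norm a = 1"
    and psi: "\<psi> \<in> cdual" "norm \<psi> \<le> 1" "blinfun_apply \<psi> a = 1"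
    and g: "\<And>n. g n \<in> cdual" "\<And>n. norm (g n) \<le> 1"
    and conv: "(\<lambda>n. Re (blinfun_apply (g n) a)) \<longlonglongrightarrow> 1"
  shows "(\<lambda>n. norm (g n - \<psi>)) \<longlonglongrightarrow> 0"
proof -
  obtain L where L: "\<And>\<epsilon>. \<epsilon> > 0 \<Longrightarrow> \<exists>\<tau>>0. \<forall>(f :: 'a \<Rightarrow>\<^sub>L complex) b. norm f \<le> 1 \<longrightarrow> norm b = 1 \<longrightarrow>
            \<bar>Re (blinfun_apply f b) + L b\<bar> < (1 - Re (blinfun_apply f a)) / \<tau> + \<epsilon>"
    using smulian0[OF sm na] by blast
  show ?thesis
  proof (rule LIMSEQ_I)
    fix r :: real assume r: "r > 0"
    obtain \<tau> where t: "\<tau> > 0" "\<And>(f :: 'a \<Rightarrow>\<^sub>L complex) b. norm f \<le> 1 \<Longrightarrow> norm b = 1 \<Longrightarrow>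
            \<bar>Re (blinfun_apply f b) + L b\<bar> < (1 - Re (blinfun_apply f a)) / \<tau> + r / 16"
      using L[of "r/16"] r by auto
    obtain M where M: "\<And>n. n \<ge> M \<Longrightarrow> norm (Re (blinfun_apply (g n) a) - 1) < \<tau> * (r / 16)"
      using LIMSEQ_D[OF conv, of "\<tau> * (r/16)"] t(1) r by auto
    show "\<exists>no. \<forall>n\<ge>no. norm (norm (g n - \<psi>) - 0) < r"
    proof (intro exI allI impI)
      fix n assume n: "n \<ge> M"
      define \<eta> where "\<eta> = 1 - Re (blinfun_apply (g n) a)"
      have "\<bar>Re (blinfun_apply (g n) a) - 1\<bar> < \<tau> * (r / 16)" using M[OF n] by simp
      then have "\<eta> < \<tau> * (r / 16)" unfolding \<eta>_def by linarith
      then have et: "\<eta> / \<tau> < r / 16" using t(1) by (simp add: pos_divide_less_eq mult.commute)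
      have Rpart: "\<bar>Re (blinfun_apply (g n) b) - Re (blinfun_apply \<psi> b)\<bar> < \<eta> / \<tau> + r / 8" if nb: "norm b = 1" for b
      proof -
        have "\<bar>Re (blinfun_apply (g n) b) + L b\<bar> < \<eta> / \<tau> + r / 16" using t(2)[OF g(2) nb] unfolding \<eta>_def .
        moreover have "\<bar>Re (blinfun_apply \<psi> b) + L b\<bar> < (1 - 1) / \<tau> + r / 16" using t(2)[OF psi(2) nb] psi(3) by simp
        moreover have "\<bar>Re (blinfun_apply (g n) b) - Re (blinfun_apply \<psi> b)\<bar> \<le>
            \<bar>Re (blinfun_apply (g n) b) + L b\<bar> + \<bar>Re (blinfun_apply \<psi> b) + L b\<bar>"
          using abs_triangle_ineq4[of "Re (blinfun_apply (g n) b) + L b" "Re (blinfun_apply \<psi> b) + L b"] by simp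
        ultimately show ?thesis by simp
      qed
      have key: "cmod (blinfun_apply (g n - \<psi>) b) \<le> r / 2" if nb: "norm b = 1" for b
      proof -
        have nib: "norm (\<i> *\<^sub>C b) = 1" using nb by (simp add: norm_scaleC)
        have "\<bar>Re (blinfun_apply (g n) (\<i> *\<^sub>C b)) - Re (blinfun_apply \<psi> (\<i> *\<^sub>C b))\<bar> < \<eta> / \<tau> + r / 8"
          by (rule Rpart[OF nib])
        then have I: "\<bar>Im (blinfun_apply (g n) b) - Im (blinfun_apply \<psi> b)\<bar> < \<eta> / \<tau> + r / 8"
          using cdualD[OF g(1)] cdualD[OF psi(1)] by simp
        have R: "\<bar>Re (blinfun_apply (g n) b) - Re (blinfun_apply \<psi> b)\<bar> < \<eta> / \<tau> + r / 8" by (rule Rpart[OF nb])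
        have "cmod (blinfun_apply (g n - \<psi>) b) \<le> \<bar>Re (blinfun_apply (g n - \<psi>) b)\<bar> + \<bar>Im (blinfun_apply (g n - \<psi>) b)\<bar>"
          by (rule cmod_le)
        also have "\<dots> < 2 * (\<eta> / \<tau>) + r / 4" using R I by (simp add: blinfun.diff_left)
        also have "\<dots> < r / 2" using et r by linarith
        finally show ?thesis by simp
      qed
      have "norm (g n - \<psi>) \<le> r / 2"
      proof (rule norm_blinfun_bound)
        show "0 \<le> r / 2" using r by simp
        fix b :: 'a
        show "norm (blinfun_apply (g n - \<psi>) b) \<le> r / 2 * norm b"
        proof (cases "b = 0")
          case True then show ?thesis by (simp add: blinfun.zero_right)
        next
          case False
          define b1 where "b1 = (1 / norm b) *\<^sub>R b"
          have nb1: "norm b1 = 1" unfolding b1_def using False by simp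
          have "b = norm b *\<^sub>R b1" unfolding b1_def using False by simp
          then have "blinfun_apply (g n - \<psi>) b = norm b *\<^sub>R blinfun_apply (g n - \<psi>) b1"
            by (metis blinfun.scaleR_right)
          then have "cmod (blinfun_apply (g n - \<psi>) b) = norm b * cmod (blinfun_apply (g n - \<psi>) b1)" by simp
          also have "\<dots> \<le> norm b * (r / 2)" using key[OF nb1] by (intro mult_left_mono) auto
          finally show ?thesis by (simp add: mult.commute)
        qed
      qed
      then show "norm (norm (g n - \<psi>) - 0) < r" using r by simp
    qed
  qed
qed

lemma KC1:
  fixes \<kappa> :: "'x \<Rightarrow> 'a::{complex_normed_vector, banach} set" and \<psi> :: "'a \<Rightarrow>\<^sub>L complex"
  assumes refl: "reflexive_space TYPE('a)" and sm: "frechet_smooth TYPE('a)"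
    and qA: "quotient_vector_bundle X UNIV scaleC \<kappa>" and bbA: "banach_bundle X UNIV scaleC \<kappa>"
    and x0: "x0 \<in> topspace X" and psi: "\<psi> \<in> annih (\<kappa> x0)" "norm \<psi> = 1"
    and y: "\<forall>n. y n \<in> topspace X" and lim: "limitin X y x0 sequentially"
  shows "\<exists>g. (\<forall>n. g n \<in> annih (\<kappa> (y n))) \<and> (\<lambda>n. norm (g n - \<psi>)) \<longlonglongrightarrow> 0"
proof -
  interpret A: qbun UNIV scaleC X \<kappa> by (rule qbun_A[OF qA])
  have psiD: "\<psi> \<in> cdual" using psi(1) annih_sub by blast
  obtain a where a: "norm a \<le> 1" "blinfun_apply \<psi> a = of_real (norm \<psi>)" using reflexive_attain[OF refl psiD] by blast
  have pa: "blinfun_apply \<psi> a = 1" using a(2) psi(2) by simp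
  have na: "norm a = 1"
  proof -
    have "1 = cmod (blinfun_apply \<psi> a)" using pa by simp
    also have "\<dots> \<le> norm \<psi> * norm a" by (rule norm_blinfun)
    finally show ?thesis using a(1) psi(2) by simp
  qed
  have d0: "infdist a (\<kappa> x0) = 1"
  proof (rule antisym)
    show "infdist a (\<kappa> x0) \<le> 1" using A.p_le_norm[OF x0, of a] na by simp
    have "cmod (blinfun_apply \<psi> a) \<le> norm \<psi> * infdist a (\<kappa> x0)" by (rule annih_bound[OF psi(1) A.kne[OF x0]])
    then show "1 \<le> infdist a (\<kappa> x0)" using pa psi(2) by simp
  qed
  have cont: "continuous_map X euclideanreal (\<lambda>x. infdist a (\<kappa> x))" by (rule A.bb_dist_cont[OF bbA]) simp
  have "limitin euclideanreal ((\<lambda>x. infdist a (\<kappa> x)) \<circ> y) (infdist a (\<kappa> x0)) sequentially"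
    by (rule continuous_map_limit[OF cont lim])
  then have conv: "(\<lambda>n. infdist a (\<kappa> (y n))) \<longlonglongrightarrow> 1" using d0 by (simp add: o_def)
  have "\<forall>n. \<exists>\<phi>. \<phi> \<in> cdual \<and> (\<forall>v\<in>\<kappa> (y n). blinfun_apply \<phi> v = 0) \<and> norm \<phi> \<le> 1 \<and> blinfun_apply \<phi> a = of_real (infdist a (\<kappa> (y n)))"
    using hb_annih[OF A.ksub] y by blast
  then obtain g where g: "\<And>n. g n \<in> cdual" "\<And>n. \<forall>v\<in>\<kappa> (y n). blinfun_apply (g n) v = 0" "\<And>n. norm (g n) \<le> 1"
    "\<And>n. blinfun_apply (g n) a = of_real (infdist a (\<kappa> (y n)))" by metis
  have gA: "\<forall>n. g n \<in> annih (\<kappa> (y n))" unfolding annih_def using g(1,2) by blast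
  have "(\<lambda>n. Re (blinfun_apply (g n) a)) \<longlonglongrightarrow> 1" using conv g(4) by simp
  from smulian[OF sm na psiD _ pa g(1,3) this] psi(2) have "(\<lambda>n. norm (g n - \<psi>)) \<longlonglongrightarrow> 0" by simp
  then show ?thesis using gA by blast
qed

lemma KC:
  fixes \<kappa> :: "'x \<Rightarrow> 'a::{complex_normed_vector, banach} set" and \<psi> :: "'a \<Rightarrow>\<^sub>L complex"
  assumes refl: "reflexive_space TYPE('a)" and sm: "frechet_smooth TYPE('a)"
    and qA: "quotient_vector_bundle X UNIV scaleC \<kappa>" and bbA: "banach_bundle X UNIV scaleC \<kappa>"
    and x0: "x0 \<in> topspace X" and psi: "\<psi> \<in> annih (\<kappa> x0)"
    and y: "\<forall>n. y n \<in> topspace X" and lim: "limitin X y x0 sequentially"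
  shows "(\<lambda>n. infdist \<psi> (annih (\<kappa> (y n)))) \<longlonglongrightarrow> 0"
proof (cases "\<psi> = 0")
  case True
  have "0 \<in> annih (\<kappa> (y n))" for n unfolding annih_def cdual_def by simp
  then show ?thesis using True by simp
next
  case False
  interpret D: cvs cdual dual_smul by (rule cvs_D)
  define c where "c = norm \<psi>"
  have c: "c > 0" using False c_def by simp
  define \<psi>1 where "\<psi>1 = dual_smul (of_real (1 / c)) \<psi>"
  have psiD: "\<psi> \<in> cdual" using psi annih_sub by blast
  have "norm \<psi>1 = cmod (of_real (1 / c)) * c" unfolding \<psi>1_def c_def by (rule norm_dual_smul)
  then have n1: "norm \<psi>1 = 1" using c by (simp add: norm_divide)
  have p1: "\<psi>1 \<in> annih (\<kappa> x0)" unfolding \<psi>1_def using csub_annih psi unfolding csubspace_in_def by blast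
  obtain g where g: "\<forall>n. g n \<in> annih (\<kappa> (y n))" "(\<lambda>n. norm (g n - \<psi>1)) \<longlonglongrightarrow> 0"
    using KC1[OF refl sm qA bbA x0 p1 n1 y lim] by blast
  have hback: "dual_smul (of_real c) \<psi>1 = \<psi>" unfolding \<psi>1_def using D.sm_assoc[OF psiD] D.sm_one[OF psiD] c by simp
  have bnd: "infdist \<psi> (annih (\<kappa> (y n))) \<le> c * norm (g n - \<psi>1)" for n
  proof -
    have "dual_smul (of_real c) (g n) \<in> annih (\<kappa> (y n))" using csub_annih g(1) unfolding csubspace_in_def by blast
    then have "infdist \<psi> (annih (\<kappa> (y n))) \<le> dist \<psi> (dual_smul (of_real c) (g n))" by (rule infdist_le)
    also have "\<dots> = norm (dual_smul (of_real c) (g n - \<psi>1))"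
    proof -
      have gD: "g n \<in> cdual" using g(1) annih_sub by blast
      have p1D: "\<psi>1 \<in> cdual" using p1 annih_sub by blast
      have "dual_smul (of_real c) (g n - \<psi>1) = dual_smul (of_real c) (g n) - \<psi>"
        using D.sm_diff[OF gD p1D] hback by simp
      then show ?thesis by (simp add: dist_norm norm_minus_commute)
    qed
    also have "\<dots> = c * norm (g n - \<psi>1)" using norm_dual_smul[of "of_real c" "g n - \<psi>1"] c by simp
    finally show ?thesis .
  qed
  have "(\<lambda>n. c * norm (g n - \<psi>1)) \<longlonglongrightarrow> 0" using tendsto_mult_right_zero[OF g(2)] by simp
  then show ?thesis
  proof (rule Lim_null_comparison[rotated])
    show "eventually (\<lambda>n. norm (infdist \<psi> (annih (\<kappa> (y n)))) \<le> c * norm (g n - \<psi>1)) sequentially"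
    proof (rule always_eventually, rule allI)
      fix n
      have "0 \<le> infdist \<psi> (annih (\<kappa> (y n)))" by (rule infdist_nonneg)
      then show "norm (infdist \<psi> (annih (\<kappa> (y n)))) \<le> c * norm (g n - \<psi>1)" using bnd[of n] by simp
    qed
  qed
qed

lemma qvbD_of_bbA:
  fixes \<kappa> :: "'x \<Rightarrow> 'a::{complex_normed_vector, banach} set"
  assumes refl: "reflexive_space TYPE('a)" and sm: "frechet_smooth TYPE('a)" and fc: "first_countable X"
    and qA: "quotient_vector_bundle X UNIV scaleC \<kappa>" and bbA: "banach_bundle X UNIV scaleC \<kappa>"
  shows "quotient_vector_bundle X (cdual :: ('a \<Rightarrow>\<^sub>L complex) set) dual_smul (\<lambda>x. annih (\<kappa> x))"
proof (rule qfib.qvb_of_usc[OF qfib_D])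
  interpret D: qfib cdual dual_smul X "\<lambda>x. annih (\<kappa> x)" by (rule qfib_D)
  fix \<phi> :: "'a \<Rightarrow>\<^sub>L complex" and t :: real assume phi: "\<phi> \<in> cdual"
  show "openin X {y \<in> topspace X. infdist \<phi> (annih (\<kappa> y)) < t}"
  proof (rule fc_seq_open[OF fc])
    show "{y \<in> topspace X. infdist \<phi> (annih (\<kappa> y)) < t} \<subseteq> topspace X" by blast
  next
    fix x0 and y :: "nat \<Rightarrow> 'x"
    assume x0: "x0 \<in> {y \<in> topspace X. infdist \<phi> (annih (\<kappa> y)) < t}" and yX: "\<forall>n. y n \<in> topspace X"
      and lim: "limitin X y x0 sequentially"
    have x0X: "x0 \<in> topspace X" and lt: "infdist \<phi> (annih (\<kappa> x0)) < t" using x0 by auto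
    obtain \<psi> where psi: "\<psi> \<in> annih (\<kappa> x0)" "dist \<phi> \<psi> < t" using infdist_lt[OF D.kne[OF x0X] lt] by blast
    have "(\<lambda>n. infdist \<psi> (annih (\<kappa> (y n)))) \<longlonglongrightarrow> 0" by (rule KC[OF refl sm qA bbA x0X psi(1) yX lim])
    then have "eventually (\<lambda>n. infdist \<psi> (annih (\<kappa> (y n))) < t - dist \<phi> \<psi>) sequentially"
      using psi(2) by (intro order_tendstoD(2)) auto
    then show "eventually (\<lambda>n. y n \<in> {y \<in> topspace X. infdist \<phi> (annih (\<kappa> y)) < t}) sequentially"
    proof eventually_elim
      case (elim n)
      have "infdist \<phi> (annih (\<kappa> (y n))) \<le> infdist \<psi> (annih (\<kappa> (y n))) + dist \<phi> \<psi>" by (rule infdist_triangle)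
      then show ?case using elim yX by auto
    qed
  qed
qed

theorem corollary7p16:
  fixes X :: "'x topology" and \<kappa> :: "'x \<Rightarrow> 'a::{complex_normed_vector, banach} set"
  assumes "Hausdorff_space X" and "first_countable X"
    and "quotient_vector_bundle X UNIV scaleC \<kappa>"
    and "\<forall>x\<in>topspace X. closed (\<kappa> x)"
  shows "(quotient_vector_bundle X (cdual :: ('a \<Rightarrow>\<^sub>L complex) set) dual_smul (\<lambda>x. annih (\<kappa> x)) \<longrightarrow>
            banach_bundle X UNIV scaleC \<kappa> \<and>
            banach_bundle X (cdual :: ('a \<Rightarrow>\<^sub>L complex) set) dual_smul (\<lambda>x. annih (\<kappa> x))) \<and>
         (reflexive_space TYPE('a) \<and> frechet_smooth TYPE('a) \<longrightarrow>
            (banach_bundle X UNIV scaleC \<kappa> \<longleftrightarrow>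
             banach_bundle X (cdual :: ('a \<Rightarrow>\<^sub>L complex) set) dual_smul (\<lambda>x. annih (\<kappa> x))))"
proof (rule conjI; rule impI)
  assume qD: "quotient_vector_bundle X (cdual :: ('a \<Rightarrow>\<^sub>L complex) set) dual_smul (\<lambda>x. annih (\<kappa> x))"
  show "banach_bundle X UNIV scaleC \<kappa> \<and> banach_bundle X (cdual :: ('a \<Rightarrow>\<^sub>L complex) set) dual_smul (\<lambda>x. annih (\<kappa> x))"
    by (rule part1[OF assms(3,4) qD])
next
  assume rs: "reflexive_space TYPE('a) \<and> frechet_smooth TYPE('a)"
  show "banach_bundle X UNIV scaleC \<kappa> \<longleftrightarrow> banach_bundle X (cdual :: ('a \<Rightarrow>\<^sub>L complex) set) dual_smul (\<lambda>x. annih (\<kappa> x))"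
  proof
    assume bbA: "banach_bundle X UNIV scaleC \<kappa>"
    have qD: "quotient_vector_bundle X (cdual :: ('a \<Rightarrow>\<^sub>L complex) set) dual_smul (\<lambda>x. annih (\<kappa> x))"
      using qvbD_of_bbA[OF _ _ assms(2,3) bbA] rs by blast
    show "banach_bundle X (cdual :: ('a \<Rightarrow>\<^sub>L complex) set) dual_smul (\<lambda>x. annih (\<kappa> x))"
      using part1[OF assms(3,4) qD] by blast
  next
    assume bbD: "banach_bundle X (cdual :: ('a \<Rightarrow>\<^sub>L complex) set) dual_smul (\<lambda>x. annih (\<kappa> x))"
    have qD: "quotient_vector_bundle X (cdual :: ('a \<Rightarrow>\<^sub>L complex) set) dual_smul (\<lambda>x. annih (\<kappa> x))"
      by (rule qvbD_of_bbD[OF bbD])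
    show "banach_bundle X UNIV scaleC \<kappa>" using part1[OF assms(3,4) qD] by blast
  qed
qed

end
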